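(* Let $H$ be a connected graph. Then $S_2(S_2(H))$ is a minimal DPDP-graph if and only if $H$ has either exactly one edge or exactly one loop (i.e., $H$ has exactly one edge, counting loops).
   Context: Graphs are finite and may have multiple edges and loops. A leaf is a vertex of degree one. A set $D\subseteq V(G)$ is dominating if every vertex outside $D$ has a neighbor in $D$; $P$ is paired-dominating if it is dominating and the subgraph induced by $P$ has a perfect matching. A DPDP-graph is a graph $G$ admitting disjoint sets $D,P$ with $V(G)=D\cup P$, $D$ dominating and $P$ paired-dominating; a minimal DPDP-graph is a DPDP-graph no proper spanning subgraph of which is a DPDP-graph. 2-subdivision graph: for a graph $H$ with no isolated vertex, set of leaves $L_H$, and $\alpha:L_H\to\mathbb{N}=\{1,2,\dots\}$, $S_2(H)$ has vertex set $(V_H\setminus L_H)\cup\{(v,i): v\in L_H, 1\le i\le \alpha(v)\}$ together with two new vertices for each edge $e$ of $H$ ($u_e,v_e$ if $e$ joins $u\ne v$; $v_e^1,v_e^2$ if $e$ is a loop at $v$). Its edges are: the edge joining the two new vertices of each $e$; for $v\in V_H\setminus L_H$, $vv_e$ for each non-loop edge $e$ at $v$ and $vv_e^1,vv_e^2$ for each loop $e$ at $v$; for $v\in L_H$ with incident edge $e$, the edges $v_e(v,i)$, $1\le i\le\alpha(v)$. For a graph consisting of a single vertex (no edges), $S_2$ is taken to be the graph itself. *)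

theory Defs
  imports Main
begin

text \<open>Finite multigraphs with loops: each edge has a set of one (loop) or two end vertices.\<close>

record ('v,'e) mgraph =
  verts :: "'v set"
  edges :: "'e set"
  ends  :: "'e \<Rightarrow> 'v set"

definition wf_mgraph :: "('v,'e) mgraph \<Rightarrow> bool" where
  "wf_mgraph G \<longleftrightarrow> finite (verts G) \<and> finite (edges G) \<and>
     (\<forall>e\<in>edges G. ends G e \<subseteq> verts G \<and> ends G e \<noteq> {} \<and> card (ends G e) \<le> 2)"

definition is_loop :: "('v,'e) mgraph \<Rightarrow> 'e \<Rightarrow> bool" where
  "is_loop G e \<longleftrightarrow> card (ends G e) = 1"

definition degree :: "('v,'e) mgraph \<Rightarrow> 'v \<Rightarrow> nat" where
  "degree G v = card {e\<in>edges G. v \<in> ends G e \<and> \<not> is_loop G e}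
              + 2 * card {e\<in>edges G. ends G e = {v}}"

definition leaves :: "('v,'e) mgraph \<Rightarrow> 'v set" where
  "leaves G = {v\<in>verts G. degree G v = 1}"

definition adj :: "('v,'e) mgraph \<Rightarrow> 'v \<Rightarrow> 'v \<Rightarrow> bool" where
  "adj G u v \<longleftrightarrow> (\<exists>e\<in>edges G. ends G e = {u, v})"

definition connected :: "('v,'e) mgraph \<Rightarrow> bool" where
  "connected G \<longleftrightarrow> verts G \<noteq> {} \<and>
     (\<forall>u\<in>verts G. \<forall>v\<in>verts G. (adj G)\<^sup>*\<^sup>* u v)"

definition dominating :: "('v,'e) mgraph \<Rightarrow> 'v set \<Rightarrow> bool" where
  "dominating G D \<longleftrightarrow> D \<subseteq> verts G \<and> (\<forall>v\<in>verts G - D. \<exists>u\<in>D. adj G u v)"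

definition has_perfect_matching_on :: "('v,'e) mgraph \<Rightarrow> 'v set \<Rightarrow> bool" where
  "has_perfect_matching_on G P \<longleftrightarrow>
     (\<exists>M\<subseteq>edges G. (\<forall>e\<in>M. card (ends G e) = 2 \<and> ends G e \<subseteq> P) \<and>
                    (\<forall>v\<in>P. \<exists>!e. e \<in> M \<and> v \<in> ends G e))"

definition paired_dominating :: "('v,'e) mgraph \<Rightarrow> 'v set \<Rightarrow> bool" where
  "paired_dominating G P \<longleftrightarrow> dominating G P \<and> has_perfect_matching_on G P"

definition DPDP :: "('v,'e) mgraph \<Rightarrow> bool" where
  "DPDP G \<longleftrightarrow> (\<exists>D P. D \<inter> P = {} \<and> D \<union> P = verts G \<and>
                   dominating G D \<and> paired_dominating G P)"

definition minimal_DPDP :: "('v,'e) mgraph \<Rightarrow> bool" where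
  "minimal_DPDP G \<longleftrightarrow> DPDP G \<and> (\<forall>F. F \<subset> edges G \<longrightarrow> \<not> DPDP (G\<lparr>edges := F\<rparr>))"

datatype ('v,'e) s2v = Orig 'v | Pend 'v nat | Sub 'e 'v | LoopSub 'e bool
datatype ('v,'e) s2e = Mid 'e | Att 'e 'v | LAtt 'e bool | PendE 'v nat

definition S2 :: "('v,'e) mgraph \<Rightarrow> ('v \<Rightarrow> nat) \<Rightarrow> (('v,'e) s2v, ('v,'e) s2e) mgraph" where
  "S2 H \<alpha> = \<lparr>
     verts = Orig ` (verts H - leaves H)
           \<union> {Pend v i | v i. v \<in> leaves H \<and> 1 \<le> i \<and> i \<le> \<alpha> v}
           \<union> {Sub e x | e x. e \<in> edges H \<and> \<not> is_loop H e \<and> x \<in> ends H e}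
           \<union> {LoopSub e b | e b. e \<in> edges H \<and> is_loop H e},
     edges = Mid ` edges H
           \<union> {Att e v | e v. e \<in> edges H \<and> \<not> is_loop H e \<and> v \<in> ends H e \<and> v \<notin> leaves H}
           \<union> {LAtt e b | e b. e \<in> edges H \<and> is_loop H e}
           \<union> {PendE v i | v i. v \<in> leaves H \<and> 1 \<le> i \<and> i \<le> \<alpha> v},
     ends = (\<lambda>f. case f of
              Mid e \<Rightarrow> (if is_loop H e then {LoopSub e True, LoopSub e False}
                        else (\<lambda>x. Sub e x) ` ends H e)
            | Att e v \<Rightarrow> {Orig v, Sub e v}
            | LAtt e b \<Rightarrow> insert (LoopSub e b) (Orig ` ends H e)
            | PendE v i \<Rightarrow> insert (Pend v i) ((\<lambda>e. Sub e v) ` {e\<in>edges H. v \<in> ends H e}))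
   \<rparr>"

end

theory Submission
  imports Defs
begin
lemma adj_sym: "adj G u v \<longleftrightarrow> adj G v u"
  unfolding adj_def by (auto simp: insert_commute)

lemma wf_endsE:
  assumes "wf_mgraph H" "e \<in> edges H"
  obtains (loop) v where "ends H e = {v}" "v \<in> verts H" "is_loop H e"
    | (nonloop) a b where "ends H e = {a,b}" "a \<noteq> b" "a \<in> verts H" "b \<in> verts H" "\<not> is_loop H e"
proof -
  have fin: "finite (ends H e)" and ne: "ends H e \<noteq> {}" and le: "card (ends H e) \<le> 2"
    and sub: "ends H e \<subseteq> verts H"
    using assms unfolding wf_mgraph_def by (auto intro: finite_subset)
  have "card (ends H e) = 1 \<or> card (ends H e) = 2" using fin ne le
    by (metis One_nat_def card_0_eq le_Suc_eq le_zero_eq numeral_2_eq_2)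
  then show ?thesis
  proof
    assume "card (ends H e) = 1"
    then obtain v where "ends H e = {v}" by (auto simp: card_Suc_eq)
    then show ?thesis using loop sub \<open>card (ends H e) = 1\<close> unfolding is_loop_def by auto
  next
    assume c: "card (ends H e) = 2"
    then obtain a b where "ends H e = {a,b}" "a \<noteq> b" by (auto simp: card_Suc_eq numeral_2_eq_2)
    then show ?thesis using nonloop sub c unfolding is_loop_def by auto
  qed
qed

lemma degree_alt:
  assumes "wf_mgraph H"
  shows "degree H v = card {e\<in>edges H. v \<in> ends H e \<and> \<not> is_loop H e} + 2 * card {e\<in>edges H. is_loop H e \<and> v \<in> ends H e}"
proof -
  have "{e\<in>edges H. ends H e = {v}} = {e\<in>edges H. is_loop H e \<and> v \<in> ends H e}"
  proof (intro set_eqI iffI)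
    fix e assume "e \<in> {e\<in>edges H. ends H e = {v}}" then show "e \<in> {e\<in>edges H. is_loop H e \<and> v \<in> ends H e}"
      by (auto simp: is_loop_def)
  next
    fix e assume e: "e \<in> {e\<in>edges H. is_loop H e \<and> v \<in> ends H e}"
    then show "e \<in> {e\<in>edges H. ends H e = {v}}"
      by (cases rule: wf_endsE[OF assms, of e]) auto
  qed
  then show ?thesis unfolding degree_def by simp
qed

lemma leaf_edge:
  assumes "wf_mgraph H" "v \<in> leaves H"
  obtains e where "e \<in> edges H" "v \<in> ends H e" "\<not> is_loop H e"
    "\<And>e'. e' \<in> edges H \<Longrightarrow> v \<in> ends H e' \<Longrightarrow> e' = e"
proof -
  let ?A = "{e\<in>edges H. v \<in> ends H e \<and> \<not> is_loop H e}"
  let ?B = "{e\<in>edges H. is_loop H e \<and> v \<in> ends H e}"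
  have fin: "finite (edges H)" using assms unfolding wf_mgraph_def by auto
  have "card ?A + 2 * card ?B = 1" using assms degree_alt[OF assms(1)] unfolding leaves_def by auto
  then have "card ?A = 1" "card ?B = 0" by presburger+
  moreover have "finite ?B" using fin by auto
  ultimately have B: "?B = {}" by auto
  from \<open>card ?A = 1\<close> obtain e where A: "?A = {e}" by (auto simp: card_Suc_eq)
  show ?thesis
  proof (rule that)
    show "e \<in> edges H" "v \<in> ends H e" "\<not> is_loop H e" using A by auto
    fix e' assume "e' \<in> edges H" "v \<in> ends H e'"
    then show "e' = e" using A B by (cases "is_loop H e'") auto
  qed
qed

lemma S2_verts_Orig[simp]: "Orig v \<in> verts (S2 H \<alpha>) \<longleftrightarrow> v \<in> verts H \<and> v \<notin> leaves H"
  by (auto simp: S2_def)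
lemma S2_verts_Pend[simp]: "Pend v i \<in> verts (S2 H \<alpha>) \<longleftrightarrow> v \<in> leaves H \<and> 1 \<le> i \<and> i \<le> \<alpha> v"
  by (auto simp: S2_def)
lemma S2_verts_Sub[simp]: "Sub e v \<in> verts (S2 H \<alpha>) \<longleftrightarrow> e \<in> edges H \<and> \<not> is_loop H e \<and> v \<in> ends H e"
  by (auto simp: S2_def)
lemma S2_verts_LoopSub[simp]: "LoopSub e b \<in> verts (S2 H \<alpha>) \<longleftrightarrow> e \<in> edges H \<and> is_loop H e"
  by (auto simp: S2_def)
lemma S2_edges_Mid[simp]: "Mid e \<in> edges (S2 H \<alpha>) \<longleftrightarrow> e \<in> edges H"
  by (auto simp: S2_def)
lemma S2_edges_Att[simp]: "Att e v \<in> edges (S2 H \<alpha>) \<longleftrightarrow> e \<in> edges H \<and> \<not> is_loop H e \<and> v \<in> ends H e \<and> v \<notin> leaves H"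
  by (auto simp: S2_def)
lemma S2_edges_LAtt[simp]: "LAtt e b \<in> edges (S2 H \<alpha>) \<longleftrightarrow> e \<in> edges H \<and> is_loop H e"
  by (auto simp: S2_def)
lemma S2_edges_PendE[simp]: "PendE v i \<in> edges (S2 H \<alpha>) \<longleftrightarrow> v \<in> leaves H \<and> 1 \<le> i \<and> i \<le> \<alpha> v"
  by (auto simp: S2_def)
lemma S2_ends_Mid[simp]: "ends (S2 H \<alpha>) (Mid e) = (if is_loop H e then {LoopSub e True, LoopSub e False}
                        else (\<lambda>x. Sub e x) ` ends H e)"
  by (auto simp: S2_def)
lemma S2_ends_Att[simp]: "ends (S2 H \<alpha>) (Att e v) = {Orig v, Sub e v}"
  by (auto simp: S2_def)
lemma S2_ends_LAtt[simp]: "ends (S2 H \<alpha>) (LAtt e b) = insert (LoopSub e b) (Orig ` ends H e)"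
  by (auto simp: S2_def)
lemma S2_ends_PendE_raw: "ends (S2 H \<alpha>) (PendE v i) = insert (Pend v i) ((\<lambda>e. Sub e v) ` {e\<in>edges H. v \<in> ends H e})"
  by (auto simp: S2_def)

lemma S2_ends_PendE:
  assumes "wf_mgraph H" "v \<in> leaves H" "e \<in> edges H" "v \<in> ends H e"
  shows "ends (S2 H \<alpha>) (PendE v i) = {Pend v i, Sub e v}"
proof -
  obtain e0 where "e0 \<in> edges H" "v \<in> ends H e0"
    "\<And>e'. e' \<in> edges H \<Longrightarrow> v \<in> ends H e' \<Longrightarrow> e' = e0" using leaf_edge[OF assms(1,2)] by metis
  then have "{e\<in>edges H. v \<in> ends H e} = {e}" using assms by blast
  then show ?thesis by (simp add: S2_ends_PendE_raw)
qed

lemma S2_edges_cases: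
  assumes "f \<in> edges (S2 H \<alpha>)"
  obtains (Mid) e where "f = Mid e" "e \<in> edges H"
    | (Att) e v where "f = Att e v" "e \<in> edges H" "\<not> is_loop H e" "v \<in> ends H e" "v \<notin> leaves H"
    | (LAtt) e b where "f = LAtt e b" "e \<in> edges H" "is_loop H e"
    | (PendE) v i where "f = PendE v i" "v \<in> leaves H" "1 \<le> i" "i \<le> \<alpha> v"
  using assms by (cases f) auto

lemma S2_verts_cases:
  assumes "x \<in> verts (S2 H \<alpha>)"
  obtains (Orig) v where "x = Orig v" "v \<in> verts H" "v \<notin> leaves H"
    | (Pend) v i where "x = Pend v i" "v \<in> leaves H" "1 \<le> i" "i \<le> \<alpha> v"
    | (Sub) e v where "x = Sub e v" "e \<in> edges H" "\<not> is_loop H e" "v \<in> ends H e"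
    | (LoopSub) e b where "x = LoopSub e b" "e \<in> edges H" "is_loop H e"
  using assms by (cases x) auto

lemma wf_ends_sub: "wf_mgraph H \<Longrightarrow> e \<in> edges H \<Longrightarrow> v \<in> ends H e \<Longrightarrow> v \<in> verts H"
  by (auto simp: wf_mgraph_def)

lemma loop_not_leaf: "wf_mgraph H \<Longrightarrow> e \<in> edges H \<Longrightarrow> is_loop H e \<Longrightarrow> v \<in> ends H e \<Longrightarrow> v \<notin> leaves H"
  by (metis leaf_edge)

lemma leaves_sub: "leaves H \<subseteq> verts H" by (auto simp: leaves_def)

lemma S2_noloop:
  assumes "wf_mgraph H"
  shows "\<forall>f\<in>edges (S2 H \<alpha>). card (ends (S2 H \<alpha>) f) = 2"
proof
  fix f assume f: "f \<in> edges (S2 H \<alpha>)"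
  then show "card (ends (S2 H \<alpha>) f) = 2"
  proof (cases rule: S2_edges_cases)
    case (Mid e)
    then show ?thesis by (cases rule: wf_endsE[OF assms, of e]) auto
  next
    case (Att e v) then show ?thesis by simp
  next
    case (LAtt e b) then show ?thesis by (cases rule: wf_endsE[OF assms, of e]) auto
  next
    case (PendE v i)
    then obtain e where "e \<in> edges H" "v \<in> ends H e" using leaf_edge[OF assms] by metis
    then show ?thesis using PendE S2_ends_PendE[OF assms] by simp
  qed
qed

lemma S2_wf:
  assumes "wf_mgraph H"
  shows "wf_mgraph (S2 H \<alpha>)"
proof -
  have fv: "finite (verts H)" and fe: "finite (edges H)" using assms by (auto simp: wf_mgraph_def)
  have fends: "\<And>e. e \<in> edges H \<Longrightarrow> finite (ends H e)" using assms
    by (auto simp: wf_mgraph_def intro: finite_subset)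
  have "verts (S2 H \<alpha>) \<subseteq> Orig ` verts H \<union> (\<Union>v\<in>verts H. Pend v ` {1..\<alpha> v})
     \<union> (\<Union>e\<in>edges H. (\<lambda>x. Sub e x) ` ends H e) \<union> (\<Union>e\<in>edges H. {LoopSub e True, LoopSub e False})"
    using leaves_sub[of H]
    by (auto simp: S2_def)
  moreover have "finite (Orig ` verts H \<union> (\<Union>v\<in>verts H. Pend v ` {1..\<alpha> v})
     \<union> (\<Union>e\<in>edges H. (\<lambda>x. Sub e x) ` ends H e) \<union> (\<Union>e\<in>edges H. {LoopSub e True, LoopSub e False}))"
    using fv fe fends by auto
  ultimately have 1: "finite (verts (S2 H \<alpha>))" by (rule finite_subset)
  have "edges (S2 H \<alpha>) \<subseteq> Mid ` edges H \<union> (\<Union>e\<in>edges H. (\<lambda>x. Att e x) ` ends H e)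
     \<union> (\<Union>e\<in>edges H. {LAtt e True, LAtt e False}) \<union> (\<Union>v\<in>verts H. PendE v ` {1..\<alpha> v})"
    using leaves_sub[of H]
    by (auto simp: S2_def)
  moreover have "finite (Mid ` edges H \<union> (\<Union>e\<in>edges H. (\<lambda>x. Att e x) ` ends H e)
     \<union> (\<Union>e\<in>edges H. {LAtt e True, LAtt e False}) \<union> (\<Union>v\<in>verts H. PendE v ` {1..\<alpha> v}))"
    using fv fe fends by auto
  ultimately have 2: "finite (edges (S2 H \<alpha>))" by (rule finite_subset)
  have 3: "ends (S2 H \<alpha>) f \<subseteq> verts (S2 H \<alpha>) \<and> ends (S2 H \<alpha>) f \<noteq> {}"
    if f: "f \<in> edges (S2 H \<alpha>)" for f
    using f
  proof (cases rule: S2_edges_cases)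
    case (Mid e)
    then show ?thesis by (cases rule: wf_endsE[OF assms, of e]) auto
  next
    case (Att e v) then show ?thesis using wf_ends_sub[OF assms] by simp
  next
    case (LAtt e b) then show ?thesis by (cases rule: wf_endsE[OF assms, of e]) (auto dest: loop_not_leaf[OF assms])
  next
    case (PendE v i)
    then obtain e where "e \<in> edges H" "v \<in> ends H e" "\<not> is_loop H e" using leaf_edge[OF assms] by metis
    then show ?thesis using PendE S2_ends_PendE[OF assms] by simp
  qed
  show ?thesis using 1 2 3 S2_noloop[OF assms, of \<alpha>] unfolding wf_mgraph_def by auto
qed

lemma degree_noloop:
  assumes "\<forall>g\<in>edges G. card (ends G g) = 2"
  shows "degree G x = card {g\<in>edges G. x \<in> ends G g}"
proof -
  have "{e\<in>edges G. x \<in> ends G e \<and> \<not> is_loop G e} = {g\<in>edges G. x \<in> ends G g}"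
    using assms by (auto simp: is_loop_def)
  moreover have "{e\<in>edges G. ends G e = {x}} = {}" using assms by fastforce
  ultimately show ?thesis unfolding degree_def by (simp only:) simp
qed

lemma Orig_in_ends_S2:
  assumes "g \<in> edges (S2 H \<alpha>)" "Orig v \<in> ends (S2 H \<alpha>) g"
  shows "\<exists>e\<in>edges H. v \<in> ends H e"
  using assms(1)
proof (cases rule: S2_edges_cases)
  case (LAtt e b) then show ?thesis using assms(2) by auto
next
  case (Att e u) then show ?thesis using assms(2) by auto
qed (use assms(2) in \<open>auto simp: S2_ends_PendE_raw split: if_splits\<close>)

lemma Pend_in_ends_S2:
  assumes "g \<in> edges (S2 H \<alpha>)" "Pend v i \<in> ends (S2 H \<alpha>) g"
  shows "g = PendE v i"
  using assms(1)
proof (cases rule: S2_edges_cases)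
qed (use assms(2) in \<open>auto simp: S2_ends_PendE_raw split: if_splits\<close>)

lemma card1_two: "card S = 1 \<Longrightarrow> a \<in> S \<Longrightarrow> b \<in> S \<Longrightarrow> a = b"
  by (metis card_1_singletonE singletonD)

lemma S2_leaves:
  assumes wf: "wf_mgraph H" and al: "\<forall>v\<in>leaves H. 1 \<le> \<alpha> v"
  shows "leaves (S2 H \<alpha>) = {Pend v i | v i. v \<in> leaves H \<and> 1 \<le> i \<and> i \<le> \<alpha> v}"
proof -
  let ?G = "S2 H \<alpha>"
  let ?inc = "\<lambda>x. {g\<in>edges ?G. x \<in> ends ?G g}"
  have deg: "degree ?G x = card (?inc x)" for x using degree_noloop[OF S2_noloop[OF wf]] by blast
  have fin: "finite (?inc x)" for x using S2_wf[OF wf, of \<alpha>] by (auto simp: wf_mgraph_def)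
  have two: "card (?inc x) \<noteq> 1" if "a \<in> ?inc x" "b \<in> ?inc x" "a \<noteq> b" for x a b
    using card1_two that by metis
  have leafE: "x \<in> leaves ?G \<longleftrightarrow> x \<in> verts ?G \<and> card (?inc x) = 1" for x
    unfolding leaves_def deg by simp
  show ?thesis
  proof (intro set_eqI iffI)
    fix x assume "x \<in> leaves ?G"
    then have xv: "x \<in> verts ?G" and c1: "card (?inc x) = 1" using leafE by auto
    from xv show "x \<in> {Pend v i | v i. v \<in> leaves H \<and> 1 \<le> i \<and> i \<le> \<alpha> v}"
    proof (cases rule: S2_verts_cases)
      case (Orig v)
      obtain g where g: "?inc x = {g}" using c1 by (rule card_1_singletonE)
      then have "g \<in> ?inc x" by simp
      then have "g \<in> edges ?G" "Orig v \<in> ends ?G g" using Orig(1) by simp_all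
      then obtain e where e: "e \<in> edges H" "v \<in> ends H e" using Orig_in_ends_S2 by metis
      show ?thesis
      proof (cases "is_loop H e")
        case True
        then have "LAtt e True \<in> ?inc x" "LAtt e False \<in> ?inc x" using e Orig(1) by simp_all
        then show ?thesis using two[of "LAtt e True" x "LAtt e False"] c1 by simp
      next
        case False
        let ?A = "{e\<in>edges H. v \<in> ends H e \<and> \<not> is_loop H e}"
        let ?B = "{e\<in>edges H. is_loop H e \<and> v \<in> ends H e}"
        have fA: "finite ?A" "finite ?B" using wf by (auto simp: wf_mgraph_def)
        have "e \<in> ?A" using e False by auto
        then have "card ?A \<ge> 1" using fA(1) card_0_eq[OF fA(1)] by (cases "card ?A") auto
        moreover have "degree H v \<noteq> 1" using Orig by (auto simp: leaves_def)
        ultimately have "card ?A \<ge> 2 \<or> card ?B \<ge> 1" using degree_alt[OF wf, of v] by linarith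
        then show ?thesis
        proof
          assume "card ?A \<ge> 2"
          then obtain e' where e': "e' \<in> ?A" "e' \<noteq> e"
          proof -
            have "card (?A - {e}) \<ge> 1" using \<open>card ?A \<ge> 2\<close> \<open>e \<in> ?A\<close> fA(1) by simp
            then have "?A - {e} \<noteq> {}" by (cases "?A - {e} = {}") auto
            then obtain e' where "e' \<in> ?A - {e}" by blast
            then show ?thesis using that by blast
          qed
          then have "Att e v \<in> ?inc x" "Att e' v \<in> ?inc x" using e False Orig by simp_all
          then show ?thesis using two[of "Att e v" x "Att e' v"] c1 e' by simp
        next
          assume "card ?B \<ge> 1"
          then have "?B \<noteq> {}" by (cases "?B = {}") auto
          then obtain e' where e': "e' \<in> ?B" by blast
          then have "LAtt e' True \<in> ?inc x" "LAtt e' False \<in> ?inc x" using Orig(1) by simp_all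
          then show ?thesis using two[of "LAtt e' True" x "LAtt e' False"] c1 by simp
        qed
      qed
    next
      case (Pend v i) then show ?thesis by auto
    next
      case (Sub e v)
      show ?thesis
      proof (cases "v \<in> leaves H")
        case True
        have "PendE v 1 \<in> ?inc x" using True al Sub by (auto simp: S2_ends_PendE_raw)
        moreover have "Mid e \<in> ?inc x" using Sub by auto
        ultimately show ?thesis using two[of "PendE v 1" x "Mid e"] c1 by simp
      next
        case False
        have "Att e v \<in> ?inc x" using False Sub by auto
        moreover have "Mid e \<in> ?inc x" using Sub by auto
        ultimately show ?thesis using two[of "Att e v" x "Mid e"] c1 by simp
      qed
    next
      case (LoopSub e b)
      have "LAtt e b \<in> ?inc x" "Mid e \<in> ?inc x" using LoopSub by auto
      then show ?thesis using two[of "LAtt e b" x "Mid e"] c1 by simp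
    qed
  next
    fix x :: "('a,'b) s2v" assume "x \<in> {Pend v i | v i. v \<in> leaves H \<and> 1 \<le> i \<and> i \<le> \<alpha> v}"
    then obtain v i where x: "x = Pend v i" "v \<in> leaves H" "1 \<le> i" "i \<le> \<alpha> v" by auto
    have "?inc x = {PendE v i}"
    proof
      show "?inc x \<subseteq> {PendE v i}" using x(1) Pend_in_ends_S2[of _ H \<alpha> v i] by blast
      show "{PendE v i} \<subseteq> ?inc x" using x by (simp add: S2_ends_PendE_raw)
    qed
    then show "x \<in> leaves ?G" using leafE x by simp
  qed
qed

lemma S2_noiso:
  assumes wf: "wf_mgraph H" and ni: "\<forall>v\<in>verts H. \<exists>e\<in>edges H. v \<in> ends H e"
  shows "\<forall>x\<in>verts (S2 H \<alpha>). \<exists>g\<in>edges (S2 H \<alpha>). x \<in> ends (S2 H \<alpha>) g"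
proof
  fix x assume "x \<in> verts (S2 H \<alpha>)"
  then show "\<exists>g\<in>edges (S2 H \<alpha>). x \<in> ends (S2 H \<alpha>) g"
  proof (cases rule: S2_verts_cases)
    case (Orig v)
    then obtain e where e: "e \<in> edges H" "v \<in> ends H e" using ni by auto
    show ?thesis
    proof (cases "is_loop H e")
      case True then show ?thesis using e Orig by (intro bexI[of _ "LAtt e True"]) auto
    next
      case False then show ?thesis using e Orig by (intro bexI[of _ "Att e v"]) auto
    qed
  next
    case (Pend v i) then show ?thesis by (intro bexI[of _ "PendE v i"]) (auto simp: S2_ends_PendE_raw)
  next
    case (Sub e v) then show ?thesis by (intro bexI[of _ "Mid e"]) auto
  next
    case (LoopSub e b) then show ?thesis by (intro bexI[of _ "Mid e"]) auto
  qed
qed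

lemma card2_other:
  assumes "card S = 2" "x \<in> S"
  shows "\<exists>y. y \<noteq> x \<and> S = {x, y}"
proof -
  obtain a b where ab: "S = {a, b}" "a \<noteq> b" using assms(1) card_2_iff by metis
  show ?thesis
  proof (cases "x = a")
    case True then show ?thesis using ab by (intro exI[of _ b]) auto
  next
    case False then have "x = b" using ab assms(2) by blast
    then show ?thesis using ab by (intro exI[of _ a]) auto
  qed
qed

lemma weak_DPDP:
  assumes "DPDP G"
  shows "\<exists>P\<subseteq>verts G. (\<forall>a\<in>verts G. \<exists>b. adj G a b \<and> (b \<in> P \<longleftrightarrow> a \<notin> P)) \<and>
                     (\<forall>a\<in>P. \<exists>b. b \<noteq> a \<and> adj G a b \<and> b \<in> P)"
proof -
  obtain D P where DP: "D \<inter> P = {}" "D \<union> P = verts G" "dominating G D" "paired_dominating G P"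
    using assms unfolding DPDP_def by blast
  obtain M where M: "M \<subseteq> edges G" "\<forall>e\<in>M. card (ends G e) = 2 \<and> ends G e \<subseteq> P"
    "\<forall>v\<in>P. \<exists>!e. e \<in> M \<and> v \<in> ends G e"
    using DP(4) unfolding paired_dominating_def has_perfect_matching_on_def by blast
  show ?thesis
  proof (intro exI[of _ P] conjI ballI)
    show "P \<subseteq> verts G" using DP by blast
  next
    fix a assume a: "a \<in> verts G"
    show "\<exists>b. adj G a b \<and> (b \<in> P) = (a \<notin> P)"
    proof (cases "a \<in> P")
      case True
      then have "a \<in> verts G - D" using DP by blast
      then obtain u where u: "u \<in> D" "adj G u a" using DP(3) unfolding dominating_def by blast
      have "adj G a u" using u(2) adj_sym by metis
      moreover have "u \<notin> P" using u(1) DP(1) by blast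
      ultimately show ?thesis using True by blast
    next
      case False
      then have "a \<in> verts G - P" using a by blast
      then obtain u where u: "u \<in> P" "adj G u a" using DP(4) unfolding paired_dominating_def dominating_def by blast
      have "adj G a u" using u(2) adj_sym by metis
      then show ?thesis using False u(1) by blast
    qed
  next
    fix a assume a: "a \<in> P"
    then obtain e where e: "e \<in> M" "a \<in> ends G e" using M(3) by blast
    then have c: "card (ends G e) = 2" and s: "ends G e \<subseteq> P" using M(2) by auto
    then obtain b where b: "ends G e = {a, b}" "b \<noteq> a" using e(2) card2_other by metis
    then have "adj G a b" using e M(1) unfolding adj_def by blast
    then show "\<exists>b. b \<noteq> a \<and> adj G a b \<and> b \<in> P" using b s by blast
  qed
qed

lemma pm_intro:
  assumes h: "\<And>a. a \<in> P \<Longrightarrow> m a \<in> edges G \<and> card (ends G (m a)) = 2 \<and> ends G (m a) \<subseteq> P \<and> a \<in> ends G (m a)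
                 \<and> (\<forall>b\<in>ends G (m a). m b = m a)"
  shows "has_perfect_matching_on G P"
proof -
  have h1: "m a \<in> edges G" "card (ends G (m a)) = 2" "ends G (m a) \<subseteq> P" "a \<in> ends G (m a)"
    if "a \<in> P" for a using h[OF that] by blast+
  have h2: "m b = m a" if "a \<in> P" "b \<in> ends G (m a)" for a b using h[OF that(1)] that(2) by blast
  have 1: "m ` P \<subseteq> edges G" using h1 by blast
  have 2: "\<forall>e\<in>m ` P. card (ends G e) = 2 \<and> ends G e \<subseteq> P" using h1 by blast
  have 3: "\<exists>!e. e \<in> m ` P \<and> v \<in> ends G e" if v: "v \<in> P" for v
  proof (rule ex1I[of _ "m v"])
    show "m v \<in> m ` P \<and> v \<in> ends G (m v)" using v h1[of v] by blast
  next
    fix e assume "e \<in> m ` P \<and> v \<in> ends G e"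
    then obtain b where b: "b \<in> P" "e = m b" "v \<in> ends G (m b)" by blast
    then have "m v = m b" using h2 by blast
    then show "e = m v" using b by simp
  qed
  show ?thesis unfolding has_perfect_matching_on_def
    apply (rule exI[of _ "m ` P"])
    apply (intro conjI)
      apply (rule 1)
     apply (rule 2)
    apply (intro ballI)
    apply (erule 3)
    done
qed

lemma two_ends:
  assumes "card (ends G g) = 2" "x \<in> ends G g"
  obtains y where "y \<noteq> x" "ends G g = {x, y}"
  using assms card2_other by metis

lemma adj_K'I:
  assumes "f \<in> edges K" "f \<notin> Del" "ends K f = {a, b}"
  shows "adj (K\<lparr>edges := edges K - Del\<rparr>) a b"
  using assms unfolding adj_def by (intro bexI[of _ f]) auto

lemma recolor:
  fixes G :: "('a,'b) mgraph" and \<beta> :: "'a \<Rightarrow> nat"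
  assumes wf: "wf_mgraph G" and nl: "\<forall>g\<in>edges G. card (ends G g) = 2"
    and be: "\<forall>x\<in>leaves G. 1 \<le> \<beta> x" and ni: "\<forall>x\<in>verts G. \<exists>g\<in>edges G. x \<in> ends G g"
    and c1: "Q \<subseteq> verts G - leaves G"
    and c2: "\<forall>x\<in>Q. q x \<in> edges G \<and> x \<in> ends G (q x) \<and> (q x, x) \<notin> Z \<and> Att (q x) x \<notin> Del \<and>
                 (\<exists>g\<in>edges G. x \<in> ends G g \<and> (g,x) \<in> Z \<and> Att g x \<notin> Del)"
    and c3: "\<forall>g\<in>edges G. \<forall>x\<in>ends G g. (g,x) \<notin> Z \<longrightarrow> \<not>(x \<in> Q \<and> g = q x) \<longrightarrow>
               (\<forall>y\<in>ends G g. y \<noteq> x \<longrightarrow> (g,y) \<notin> Z \<and> \<not>(y \<in> Q \<and> g = q y)) \<and> Mid g \<notin> Del \<and>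
               (x \<in> leaves G \<or> (x \<notin> Q \<and> Att g x \<notin> Del))"
    and c4: "\<forall>x\<in>Q. \<forall>y\<in>ends G (q x). y \<noteq> x \<longrightarrow> (q x, y) \<in> Z \<and> Mid (q x) \<notin> Del"
    and c5: "\<forall>g\<in>edges G. \<forall>x\<in>ends G g. (g,x) \<in> Z \<longrightarrow>
               (x \<in> Q \<and> Att g x \<notin> Del) \<or> (\<exists>y\<in>ends G g. y \<noteq> x \<and> (g,y) \<notin> Z \<and> Mid g \<notin> Del)"
    and c6: "\<forall>x\<in>verts G - leaves G. x \<notin> Q \<longrightarrow> (\<exists>g\<in>edges G. x \<in> ends G g \<and> (g,x) \<notin> Z \<and> Att g x \<notin> Del)"
    and c7: "\<forall>x\<in>leaves G. (\<forall>g\<in>edges G. x \<in> ends G g \<longrightarrow> (g,x) \<notin> Z) \<and> (\<forall>k. PendE x k \<notin> Del)"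
  shows "DPDP ((S2 G \<beta>)\<lparr>edges := edges (S2 G \<beta>) - Del\<rparr>)"
proof -
  define K where "K = S2 G \<beta>"
  define K' where "K' = K\<lparr>edges := edges K - Del\<rparr>"
  define P where "P = Orig ` Q \<union> {Sub g x | g x. g \<in> edges G \<and> x \<in> ends G g \<and> (g,x) \<notin> Z}"
  define D where "D = verts K - P"
  have nloop: "\<not> is_loop G g" if "g \<in> edges G" for g using nl that by (auto simp: is_loop_def)
  have endsMid: "ends K (Mid g) = (\<lambda>x. Sub g x) ` ends G g" if "g \<in> edges G" for g
    using nloop[OF that] by (simp add: K_def)
  have QnL: "x \<in> verts G" "x \<notin> leaves G" if "x \<in> Q" for x using c1 that by auto
  have PO: "Orig x \<in> P \<longleftrightarrow> x \<in> Q" for x by (auto simp: P_def)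
  have PS: "Sub g x \<in> P \<longleftrightarrow> g \<in> edges G \<and> x \<in> ends G g \<and> (g,x) \<notin> Z" for g x by (auto simp: P_def)
  have PP: "Pend x k \<notin> P" for x k by (auto simp: P_def)
  have PL: "LoopSub g b \<notin> P" for g b by (auto simp: P_def)
  have PV: "P \<subseteq> verts K" using c1 nloop by (auto simp: P_def K_def)
  have vK': "verts K' = verts K" and eK': "ends K' = ends K" by (simp_all add: K'_def)
  have adjI: "adj K' a b" if "f \<in> edges K" "f \<notin> Del" "ends K f = {a, b}" for f a b
    using adj_K'I[OF that] by (simp add: K'_def)
  have pendE: "ends K (PendE x k) = {Pend x k, Sub g x}"
    if "x \<in> leaves G" "g \<in> edges G" "x \<in> ends G g" for x k g
    using S2_ends_PendE[OF wf that] by (simp add: K_def)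
  have leafv: "x \<in> verts G" if "x \<in> leaves G" for x using that leaves_sub[of G] by blast
  define mK where "mK a = (case a of Orig x \<Rightarrow> Att (q x) x
       | Sub g x \<Rightarrow> (if x \<in> Q \<and> g = q x then Att g x else Mid g) | _ \<Rightarrow> Mid undefined)" for a
  have mO: "mK (Orig x) = Att (q x) x" for x by (simp add: mK_def)
  have mSq: "mK (Sub (q x) x) = Att (q x) x" if "x \<in> Q" for x using that by (simp add: mK_def)
  have mSn: "mK (Sub g x) = Mid g" if "\<not> (x \<in> Q \<and> g = q x)" for g x using that by (simp add: mK_def)
  have matchO: "mK (Orig x) \<in> edges K' \<and> card (ends K' (mK (Orig x))) = 2 \<and> ends K' (mK (Orig x)) \<subseteq> P
      \<and> Orig x \<in> ends K' (mK (Orig x)) \<and> (\<forall>b\<in>ends K' (mK (Orig x)). mK b = mK (Orig x))"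
    if x: "x \<in> Q" for x
  proof -
    have q: "q x \<in> edges G" "x \<in> ends G (q x)" "(q x, x) \<notin> Z" "Att (q x) x \<notin> Del" using c2 x by blast+
    have e: "ends K' (Att (q x) x) = {Orig x, Sub (q x) x}" by (simp add: K'_def K_def)
    have "Att (q x) x \<in> edges K'" using q QnL[OF x] nloop[OF q(1)] by (simp add: K'_def K_def)
    moreover have "{Orig x, Sub (q x) x} \<subseteq> P" using x q by (simp add: PO PS)
    ultimately show ?thesis unfolding mO e using mSq[OF x] by (simp add: mO)
  qed
  have pm: "has_perfect_matching_on K' P"
  proof (rule pm_intro[where m = mK])
    fix a assume a: "a \<in> P"
    show "mK a \<in> edges K' \<and> card (ends K' (mK a)) = 2 \<and> ends K' (mK a) \<subseteq> P \<and> a \<in> ends K' (mK a)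
       \<and> (\<forall>b\<in>ends K' (mK a). mK b = mK a)"
    proof (cases "a \<in> Orig ` Q")
      case True
      then obtain x where "a = Orig x" "x \<in> Q" by blast
      then show ?thesis using matchO[of x] by blast
    next
      case False
      then obtain g x where gx: "a = Sub g x" "g \<in> edges G" "x \<in> ends G g" "(g,x) \<notin> Z"
        using a by (auto simp: P_def)
      show ?thesis
      proof (cases "x \<in> Q \<and> g = q x")
        case True
        then have "mK a = mK (Orig x)" using gx mSq mO by simp
        moreover have "a \<in> ends K' (mK (Orig x))" using True gx by (simp add: mO K'_def K_def)
        ultimately show ?thesis using matchO[of x] True by metis
      next
        case nq: False
        obtain y where y: "y \<noteq> x" "ends G g = {x, y}" using two_ends nl gx by metis
        have cc: "(g,y) \<notin> Z" "\<not>(y \<in> Q \<and> g = q y)" "Mid g \<notin> Del"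
          using c3 gx nq y by auto
        have m: "mK a = Mid g" using gx nq mSn by simp
        have e: "ends K' (Mid g) = {Sub g x, Sub g y}" using endsMid[OF gx(2)] y by (simp add: eK')
        have my: "mK (Sub g y) = Mid g" using cc mSn by simp
        have "Mid g \<in> edges K'" using gx cc by (simp add: K'_def K_def)
        moreover have "{Sub g x, Sub g y} \<subseteq> P" using gx y cc by (simp add: PS)
        ultimately show ?thesis unfolding m e using gx(1) my y(1) m by simp
      qed
    qed
  qed
  have domD: "\<exists>u\<in>D. adj K' u a" if a: "a \<in> P" for a
  proof (cases "a \<in> Orig ` Q")
    case True
    then obtain x where x: "a = Orig x" "x \<in> Q" by auto
    then obtain g where g: "g \<in> edges G" "x \<in> ends G g" "(g,x) \<in> Z" "Att g x \<notin> Del" using c2 by blast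
    have "Sub g x \<in> D" using g nloop by (auto simp: D_def K_def PS)
    moreover have "adj K' (Sub g x) a"
      using adjI[of "Att g x" "Sub g x" a] g x QnL[OF x(2)] nloop by (auto simp: K_def insert_commute)
    ultimately show ?thesis by blast
  next
    case False
    then obtain g x where gx: "a = Sub g x" "g \<in> edges G" "x \<in> ends G g" "(g,x) \<notin> Z"
      using a by (auto simp: P_def)
    obtain y where y: "y \<noteq> x" "ends G g = {x, y}" using two_ends nl gx by metis
    show ?thesis
    proof (cases "x \<in> Q \<and> g = q x")
      case True
      then have "(g, y) \<in> Z" "Mid g \<notin> Del" using c4 y by auto
      then have "Sub g y \<in> D" using gx y nloop by (auto simp: D_def K_def PS)
      moreover have "adj K' (Sub g y) a"
        using adjI[of "Mid g" "Sub g y" a] gx y endsMid \<open>Mid g \<notin> Del\<close> by (auto simp: K_def insert_commute)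
      ultimately show ?thesis by blast
    next
      case nq: False
      have "x \<in> leaves G \<or> (x \<notin> Q \<and> Att g x \<notin> Del)" using c3 gx nq by blast
      then show ?thesis
      proof
        assume xl: "x \<in> leaves G"
        have "Pend x 1 \<in> D" using xl be by (auto simp: D_def K_def PP)
        moreover have "adj K' (Pend x 1) a"
          using adjI[of "PendE x 1" "Pend x 1" a] pendE[OF xl gx(2,3)] c7 xl be gx
          by (auto simp: K_def)
        ultimately show ?thesis by blast
      next
        assume h: "x \<notin> Q \<and> Att g x \<notin> Del"
        show ?thesis
        proof (cases "x \<in> leaves G")
          case True
          have "Pend x 1 \<in> D" using True be by (auto simp: D_def K_def PP)
          moreover have "adj K' (Pend x 1) a"
            using adjI[of "PendE x 1" "Pend x 1" a] pendE[OF True gx(2,3)] c7 True be gx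
            by (auto simp: K_def)
          ultimately show ?thesis by blast
        next
          case False
          have xv: "x \<in> verts G" using wf_ends_sub[OF wf gx(2,3)] .
          have "Orig x \<in> D" using h False xv by (auto simp: D_def K_def PO)
          moreover have "adj K' (Orig x) a"
            using adjI[of "Att g x" "Orig x" a] h False gx nloop by (auto simp: K_def)
          ultimately show ?thesis by blast
        qed
      qed
    qed
  qed
  have domP: "\<exists>u\<in>P. adj K' u a" if a: "a \<in> verts K" "a \<notin> P" for a
    using a(1) unfolding K_def
  proof (cases rule: S2_verts_cases)
    case (Orig x)
    then have "x \<notin> Q" using a PO by simp
    then obtain g where g: "g \<in> edges G" "x \<in> ends G g" "(g,x) \<notin> Z" "Att g x \<notin> Del"
      using c6 Orig by blast
    have "Sub g x \<in> P" using g PS by simp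
    moreover have "adj K' (Sub g x) a"
      using adjI[of "Att g x" "Sub g x" a] g Orig nloop by (auto simp: K_def insert_commute)
    ultimately show ?thesis by blast
  next
    case (Pend x k)
    obtain g where g: "g \<in> edges G" "x \<in> ends G g" using ni leafv Pend by blast
    have "Sub g x \<in> P" using g PS c7 Pend by blast
    moreover have "adj K' (Sub g x) a"
      using adjI[of "PendE x k" "Sub g x" a] pendE[OF Pend(2) g] Pend c7 by (auto simp: K_def insert_commute)
    ultimately show ?thesis by blast
  next
    case (Sub g x)
    then have gZ: "(g,x) \<in> Z" using a PS by simp
    then have "(x \<in> Q \<and> Att g x \<notin> Del) \<or> (\<exists>y\<in>ends G g. y \<noteq> x \<and> (g,y) \<notin> Z \<and> Mid g \<notin> Del)"
      using c5 Sub by blast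
    then show ?thesis
    proof
      assume h: "x \<in> Q \<and> Att g x \<notin> Del"
      have "Orig x \<in> P" using h PO by simp
      moreover have "adj K' (Orig x) a"
        using adjI[of "Att g x" "Orig x" a] h Sub QnL nloop by (auto simp: K_def)
      ultimately show ?thesis by blast
    next
      assume "\<exists>y\<in>ends G g. y \<noteq> x \<and> (g,y) \<notin> Z \<and> Mid g \<notin> Del"
      then obtain y where y: "y \<in> ends G g" "y \<noteq> x" "(g,y) \<notin> Z" "Mid g \<notin> Del" by blast
      have "Sub g y \<in> P" using y Sub PS by simp
      moreover have "adj K' (Sub g y) a"
      proof -
        obtain y' where y': "y' \<noteq> x" "ends G g = {x, y'}" using two_ends nl Sub by metis
        then have "ends G g = {x, y}" using y by auto
        then have "ends K (Mid g) = {Sub g y, a}" using endsMid[OF Sub(2)] Sub(1) by auto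
        moreover have "Mid g \<in> edges K" using Sub by (simp add: K_def)
        ultimately show ?thesis using adjI y(4) by blast
      qed
      ultimately show ?thesis by blast
    qed
  next
    case (LoopSub g b)
    then show ?thesis using nloop by simp
  qed
  have "DPDP K'" unfolding DPDP_def
  proof (rule exI[of _ D], rule exI[of _ P], intro conjI)
    show "D \<inter> P = {}" using PV by (auto simp: D_def)
    show "D \<union> P = verts K'" using PV by (auto simp: D_def vK')
    show "dominating K' D" unfolding dominating_def using domD by (auto simp: vK' D_def)
    show "paired_dominating K' P" unfolding paired_dominating_def dominating_def
      using pm domP PV by (auto simp: vK')
  qed
  then show ?thesis by (simp add: K'_def K_def)
qed

context
  fixes H :: "('v,'e) mgraph" and \<alpha> :: "'v \<Rightarrow> nat"
  assumes wf: "wf_mgraph H" and al: "\<forall>v\<in>leaves H. 1 \<le> \<alpha> v"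
begin

lemma G_leaves[simp]: "Orig v \<notin> leaves (S2 H \<alpha>)" "Sub e v \<notin> leaves (S2 H \<alpha>)" "LoopSub e b \<notin> leaves (S2 H \<alpha>)"
  "Pend v i \<in> leaves (S2 H \<alpha>) \<longleftrightarrow> v \<in> leaves H \<and> 1 \<le> i \<and> i \<le> \<alpha> v"
  using S2_leaves[OF wf al] by auto

lemma G_edges_cases:
  assumes "g \<in> edges (S2 H \<alpha>)"
  obtains (MidN) e a b where "g = Mid e" "e \<in> edges H" "ends H e = {a,b}" "a \<noteq> b" "\<not> is_loop H e"
      "ends (S2 H \<alpha>) g = {Sub e a, Sub e b}"
    | (MidL) e v where "g = Mid e" "e \<in> edges H" "ends H e = {v}" "is_loop H e"
      "ends (S2 H \<alpha>) g = {LoopSub e True, LoopSub e False}"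
    | (Att) e v where "g = Att e v" "e \<in> edges H" "\<not> is_loop H e" "v \<in> ends H e" "v \<notin> leaves H"
      "ends (S2 H \<alpha>) g = {Orig v, Sub e v}"
    | (LAtt) e b v where "g = LAtt e b" "e \<in> edges H" "is_loop H e" "ends H e = {v}"
      "ends (S2 H \<alpha>) g = {LoopSub e b, Orig v}"
    | (PendE) v i e where "g = PendE v i" "v \<in> leaves H" "1 \<le> i" "i \<le> \<alpha> v" "e \<in> edges H" "v \<in> ends H e"
      "\<not> is_loop H e" "ends (S2 H \<alpha>) g = {Pend v i, Sub e v}"
  using assms
proof (cases rule: S2_edges_cases)
  case (Mid e)
  show ?thesis
    using wf Mid(2)
  proof (cases rule: wf_endsE)
    case (loop v) then show ?thesis using MidL Mid by simp
  next
    case (nonloop a b) then show ?thesis using MidN Mid by simp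
  qed
next
  case (Att e v) then show ?thesis using that(3) by simp
next
  case (LAtt e b)
  show ?thesis
    using wf LAtt(2)
  proof (cases rule: wf_endsE)
    case (loop v) then show ?thesis using that(4) LAtt by simp
  next
    case (nonloop a b) then show ?thesis using LAtt by simp
  qed
next
  case (PendE v i)
  obtain e where e: "e \<in> edges H" "v \<in> ends H e" "\<not> is_loop H e" using leaf_edge[OF wf PendE(2)] by metis
  show ?thesis using that(5)[OF PendE e] S2_ends_PendE[OF wf PendE(2) e(1,2)] PendE(1) by simp
qed

lemma G_verts_cases:
  assumes "x \<in> verts (S2 H \<alpha>)"
  obtains (Orig) v where "x = Orig v" "v \<in> verts H" "v \<notin> leaves H"
    | (Pend) v i where "x = Pend v i" "v \<in> leaves H" "1 \<le> i" "i \<le> \<alpha> v"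
    | (Sub) e v where "x = Sub e v" "e \<in> edges H" "\<not> is_loop H e" "v \<in> ends H e"
    | (LoopSub) e b where "x = LoopSub e b" "e \<in> edges H" "is_loop H e"
  using assms by (cases rule: S2_verts_cases) auto

lemma constrS:
  fixes \<beta> :: "('v,'e) s2v \<Rightarrow> nat"
  assumes w: "w \<in> verts H" "w \<notin> leaves H" and nolw: "\<forall>e\<in>edges H. w \<in> ends H e \<longrightarrow> \<not> is_loop H e"
    and e1: "e1 \<in> edges H" "w \<in> ends H e1" and e2: "e2 \<in> edges H" "w \<in> ends H e2" "e2 \<noteq> e1"
    and be: "\<forall>x\<in>leaves (S2 H \<alpha>). 1 \<le> \<beta> x" and ni: "\<forall>v\<in>verts H. \<exists>e\<in>edges H. v \<in> ends H e"
  shows "DPDP ((S2 (S2 H \<alpha>) \<beta>)\<lparr>edges := edges (S2 (S2 H \<alpha>) \<beta>) - {Att (Att e1 w) (Sub e1 w)}\<rparr>)"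
proof -
  define G where "G = S2 H \<alpha>"
  define Q where "Q = insert (Orig w) {Sub e' w | e'. e' \<in> edges H \<and> w \<in> ends H e' \<and> e' \<noteq> e1}"
  define q :: "('v,'e) s2v \<Rightarrow> ('v,'e) s2e" where "q = (\<lambda>x. case x of Sub e' _ \<Rightarrow> Mid e' | _ \<Rightarrow> Att e1 w)"
  define Z where "Z = insert (Att e1 w, Sub e1 w) ({(Att e' w, x) | e' x. e' \<noteq> e1} \<union>
               {(Mid e', Sub e' u) | e' u. e' \<noteq> e1 \<and> w \<in> ends H e' \<and> u \<noteq> w})"
  define Del where "Del = {Att (Att e1 w) (Sub e1 w)}"
  have QO[simp]: "Orig v \<in> Q \<longleftrightarrow> v = w" for v by (auto simp: Q_def)
  have QS[simp]: "Sub e v \<in> Q \<longleftrightarrow> v = w \<and> e \<in> edges H \<and> w \<in> ends H e \<and> e \<noteq> e1" for e v by (auto simp: Q_def)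
  have QP[simp]: "Pend v i \<notin> Q" "LoopSub e b \<notin> Q" for v i e b by (auto simp: Q_def)
  have qO[simp]: "q (Orig v) = Att e1 w" "q (Sub e v) = Mid e" "q (Pend v i) = Att e1 w" "q (LoopSub e b) = Att e1 w"
    for v e i b by (simp_all add: q_def)
  have ZA[simp]: "(Att e v, x) \<in> Z \<longleftrightarrow> v = w \<and> (e \<noteq> e1 \<or> x = Sub e1 w)" for e v x by (auto simp: Z_def)
  have ZM[simp]: "(Mid e, x) \<in> Z \<longleftrightarrow> (\<exists>u. x = Sub e u \<and> u \<noteq> w) \<and> e \<noteq> e1 \<and> w \<in> ends H e" for e x
    by (auto simp: Z_def)
  have ZL[simp]: "(LAtt e b, x) \<notin> Z" "(PendE v i, x) \<notin> Z" for e b x v i by (auto simp: Z_def)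
  have D[simp]: "f \<in> Del \<longleftrightarrow> f = Att (Att e1 w) (Sub e1 w)" for f by (simp add: Del_def)
  have nl1: "\<not> is_loop H e1" using nolw e1 by blast
  have c1: "Q \<subseteq> verts G - leaves G" using w nolw by (auto simp: G_def Q_def)
  have c2: "\<forall>x\<in>Q. q x \<in> edges G \<and> x \<in> ends G (q x) \<and> (q x, x) \<notin> Z \<and> Att (q x) x \<notin> Del \<and>
                 (\<exists>g\<in>edges G. x \<in> ends G g \<and> (g,x) \<in> Z \<and> Att g x \<notin> Del)"
  proof
    fix x assume "x \<in> Q"
    then consider "x = Orig w" | e' where "x = Sub e' w" "e' \<in> edges H" "w \<in> ends H e'" "e' \<noteq> e1"
      by (auto simp: Q_def)
    then show "q x \<in> edges G \<and> x \<in> ends G (q x) \<and> (q x, x) \<notin> Z \<and> Att (q x) x \<notin> Del \<and>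
                 (\<exists>g\<in>edges G. x \<in> ends G g \<and> (g,x) \<in> Z \<and> Att g x \<notin> Del)"
    proof cases
      case 1
      have "Att e2 w \<in> edges G" using e2 nolw w by (simp add: G_def)
      then show ?thesis using 1 e1 nl1 w e2 by (auto simp: G_def intro!: bexI[of _ "Att e2 w"])
    next
      case 2
      have nl: "\<not> is_loop H e'" using 2 nolw by blast
      have "Att e' w \<in> edges G" using 2 nl w by (simp add: G_def)
      then show ?thesis using 2 nl by (auto simp: G_def intro!: bexI[of _ "Att e' w"])
    qed
  qed
  have c3: "\<forall>g\<in>edges G. \<forall>x\<in>ends G g. (g,x) \<notin> Z \<longrightarrow> \<not>(x \<in> Q \<and> g = q x) \<longrightarrow>
               (\<forall>y\<in>ends G g. y \<noteq> x \<longrightarrow> (g,y) \<notin> Z \<and> \<not>(y \<in> Q \<and> g = q y)) \<and> Mid g \<notin> Del \<and>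
               (x \<in> leaves G \<or> (x \<notin> Q \<and> Att g x \<notin> Del))"
  proof (intro ballI impI)
    fix g x assume g: "g \<in> edges G" and x: "x \<in> ends G g" and nz: "(g,x) \<notin> Z" and nq: "\<not>(x \<in> Q \<and> g = q x)"
    from g[unfolded G_def] show "(\<forall>y\<in>ends G g. y \<noteq> x \<longrightarrow> (g,y) \<notin> Z \<and> \<not>(y \<in> Q \<and> g = q y)) \<and> Mid g \<notin> Del \<and>
               (x \<in> leaves G \<or> (x \<notin> Q \<and> Att g x \<notin> Del))"
    proof (cases rule: G_edges_cases)
      case (MidN e a b)
      have gm: "Mid g \<notin> Del" using MidN by simp
      have key: "Sub e a' \<notin> Q \<and> (Mid e, Sub e b') \<notin> Z \<and> Sub e b' \<notin> Q"
        if ab: "{a', b'} = {a, b}" "a' \<noteq> b'" and xa: "x = Sub e a'" for a' b'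
      proof (cases "e = e1")
        case True then show ?thesis by simp
      next
        case False
        have w_ends: "w \<in> ends H e \<longleftrightarrow> w = a' \<or> w = b'" using MidN(3) ab by auto
        have "a' \<noteq> w" using nq xa MidN(1,2) False w_ends by simp
        moreover have "w \<notin> ends H e" using nz xa MidN(1) False \<open>a' \<noteq> w\<close> by simp
        ultimately show ?thesis using w_ends False by auto
      qed
      from x MidN(6) have "x = Sub e a \<or> x = Sub e b" by (simp add: G_def)
      then show ?thesis
      proof
        assume xa: "x = Sub e a"
        have k: "Sub e a \<notin> Q \<and> (Mid e, Sub e b) \<notin> Z \<and> Sub e b \<notin> Q" using key[of a b] xa MidN by simp
        show ?thesis using k xa MidN gm by (simp add: G_def)
      next
        assume xb: "x = Sub e b"
        have k: "Sub e b \<notin> Q \<and> (Mid e, Sub e a) \<notin> Z \<and> Sub e a \<notin> Q" using key[of b a] xb MidN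
          by (simp add: insert_commute)
        show ?thesis using k xb MidN gm by (simp add: G_def)
      qed
    next
      case (MidL e v)
      from x MidL(5) obtain c where "x = LoopSub e c" by (auto simp: G_def)
      then show ?thesis using MidL by (simp add: G_def)
    next
      case (Att e v) then show ?thesis using x nz nq by (auto simp: G_def)
    next
      case (LAtt e b v)
      then have "v \<noteq> w" using nolw by auto
      then show ?thesis using LAtt x nz nq by (auto simp: G_def)
    next
      case (PendE v i e)
      then have vw: "v \<noteq> w" using w by auto
      have gm: "Mid g \<notin> Del" using PendE by simp
      have e8: "ends G g = {Pend v i, Sub e v}" using PendE(8) by (simp add: G_def)
      have pl: "Pend v i \<in> leaves G" using PendE(2-4) by (simp add: G_def)
      from x e8 have "x = Pend v i \<or> x = Sub e v" by simp
      then show ?thesis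
      proof
        assume "x = Pend v i" then show ?thesis using e8 pl gm vw PendE(1) by simp
      next
        assume "x = Sub e v" then show ?thesis using e8 gm vw PendE(1) by simp
      qed
    qed
  qed
  have c4: "\<forall>x\<in>Q. \<forall>y\<in>ends G (q x). y \<noteq> x \<longrightarrow> (q x, y) \<in> Z \<and> Mid (q x) \<notin> Del"
  proof (intro ballI impI)
    fix x y assume "x \<in> Q" and y: "y \<in> ends G (q x)" "y \<noteq> x"
    then consider "x = Orig w" | e' where "x = Sub e' w" "e' \<in> edges H" "w \<in> ends H e'" "e' \<noteq> e1"
      by (auto simp: Q_def)
    then show "(q x, y) \<in> Z \<and> Mid (q x) \<notin> Del"
    proof cases
      case 1 then show ?thesis using y by (auto simp: G_def)
    next
      case 2
      have nl: "\<not> is_loop H e'" using 2 nolw by blast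
      then show ?thesis using 2 y by (auto simp: G_def)
    qed
  qed
  have c5: "\<forall>g\<in>edges G. \<forall>x\<in>ends G g. (g,x) \<in> Z \<longrightarrow>
               (x \<in> Q \<and> Att g x \<notin> Del) \<or> (\<exists>y\<in>ends G g. y \<noteq> x \<and> (g,y) \<notin> Z \<and> Mid g \<notin> Del)"
  proof (intro ballI impI)
    fix g x assume g: "g \<in> edges G" and x: "x \<in> ends G g" and z: "(g,x) \<in> Z"
    from g[unfolded G_def] show "(x \<in> Q \<and> Att g x \<notin> Del) \<or> (\<exists>y\<in>ends G g. y \<noteq> x \<and> (g,y) \<notin> Z \<and> Mid g \<notin> Del)"
    proof (cases rule: G_edges_cases)
      case (MidN e a b)
      show ?thesis
      proof (cases "x = Sub e a")
        case True
        then have "b = w" using MidN z by auto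
        then show ?thesis using MidN True by (auto simp: G_def intro!: bexI[of _ "Sub e b"])
      next
        case False
        then have "x = Sub e b" using MidN x by (auto simp: G_def)
        then have "a = w" using MidN z by auto
        then show ?thesis using MidN \<open>x = Sub e b\<close> by (auto simp: G_def intro!: bexI[of _ "Sub e a"])
      qed
    next
      case (MidL e v) then show ?thesis using x z by (auto simp: G_def)
    next
      case (Att e v)
      show ?thesis
      proof (cases "e = e1")
        case True
        then have "x = Sub e1 w" "v = w" using Att z by auto
        then show ?thesis using Att True by (auto simp: G_def intro!: bexI[of _ "Orig w"])
      next
        case False
        then have "v = w" using Att z by auto
        then show ?thesis using Att False x by (auto simp: G_def)
      qed
    next
      case (LAtt e b v) then show ?thesis using x z by (auto simp: G_def)
    next
      case (PendE v i e) then show ?thesis using x z by (auto simp: G_def)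
    qed
  qed
  have c6: "\<forall>x\<in>verts G - leaves G. x \<notin> Q \<longrightarrow> (\<exists>g\<in>edges G. x \<in> ends G g \<and> (g,x) \<notin> Z \<and> Att g x \<notin> Del)"
  proof (intro ballI impI)
    fix x assume x: "x \<in> verts G - leaves G" and nq: "x \<notin> Q"
    from x[unfolded G_def] have "x \<in> verts (S2 H \<alpha>)" by simp
    then show "\<exists>g\<in>edges G. x \<in> ends G g \<and> (g,x) \<notin> Z \<and> Att g x \<notin> Del"
    proof (cases rule: G_verts_cases)
      case (Orig v)
      then have vw: "v \<noteq> w" using nq by simp
      obtain e where e: "e \<in> edges H" "v \<in> ends H e" using ni Orig by blast
      show ?thesis
      proof (cases "is_loop H e")
        case True then show ?thesis using e Orig vw by (auto simp: G_def intro!: bexI[of _ "LAtt e True"])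
      next
        case False then show ?thesis using e Orig vw by (auto simp: G_def intro!: bexI[of _ "Att e v"])
      qed
    next
      case (Pend v i) then show ?thesis using x by (simp add: G_def)
    next
      case (Sub e v)
      show ?thesis
      proof (cases "v = w")
        case True
        then have "e = e1" using Sub nq by auto
        then show ?thesis using Sub True by (auto simp: G_def intro!: bexI[of _ "Mid e1"])
      next
        case False
        show ?thesis
        proof (cases "v \<in> leaves H")
          case True
          have "1 \<le> \<alpha> v" using True al by blast
          then show ?thesis using Sub True False
            by (auto simp: G_def S2_ends_PendE_raw intro!: bexI[of _ "PendE v 1"])
        next
          case nl: False
          then show ?thesis using Sub False by (auto simp: G_def intro!: bexI[of _ "Att e v"])
        qed
      qed
    next
      case (LoopSub e b) then show ?thesis by (auto simp: G_def intro!: bexI[of _ "Mid e"])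
    qed
  qed
  have c7: "\<forall>x\<in>leaves G. (\<forall>g\<in>edges G. x \<in> ends G g \<longrightarrow> (g,x) \<notin> Z) \<and> (\<forall>k. PendE x k \<notin> Del)"
  proof (intro ballI conjI allI impI)
    fix x g assume x: "x \<in> leaves G" and g: "g \<in> edges G" "x \<in> ends G g"
    obtain v i where "x = Pend v i" using x S2_leaves[OF wf al] by (auto simp: G_def)
    then have "g = PendE v i" using Pend_in_ends_S2 g by (simp add: G_def)
    then show "(g,x) \<notin> Z" by simp
  next
    fix x k show "PendE x k \<notin> Del" by simp
  qed
  show ?thesis using recolor[OF S2_wf[OF wf] S2_noloop[OF wf] be S2_noiso[OF wf ni], of Q q Z Del]
      c1 c2 c3 c4 c5 c6 c7 unfolding G_def Del_def by blast
qed


lemma constrB: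
  fixes \<beta> :: "('v,'e) s2v \<Rightarrow> nat"
  assumes e: "e \<in> edges H" "is_loop H e" "v \<in> ends H e"
    and e': "e' \<in> edges H" "v \<in> ends H e'" "e' \<noteq> e"
    and be: "\<forall>x\<in>leaves (S2 H \<alpha>). 1 \<le> \<beta> x" and ni: "\<forall>v\<in>verts H. \<exists>e\<in>edges H. v \<in> ends H e"
  shows "DPDP ((S2 (S2 H \<alpha>) \<beta>)\<lparr>edges := edges (S2 (S2 H \<alpha>) \<beta>) - {Mid (Mid e)}\<rparr>)"
proof -
  define G where "G = S2 H \<alpha>"
  define Q where "Q = {LoopSub e True, LoopSub e False :: ('v,'e) s2v}"
  define q :: "('v,'e) s2v \<Rightarrow> ('v,'e) s2e" where "q = (\<lambda>x. case x of LoopSub _ b \<Rightarrow> LAtt e b | _ \<Rightarrow> Mid e)"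
  define Z :: "(('v,'e) s2e \<times> ('v,'e) s2v) set"
    where "Z = {(Mid e, LoopSub e True), (Mid e, LoopSub e False), (LAtt e True, Orig v), (LAtt e False, Orig v)}"
  define Del :: "(('v,'e) s2v, ('v,'e) s2e) s2e set" where "Del = {Mid (Mid e)}"
  have ev: "ends H e = {v}" using wf e
    by (cases rule: wf_endsE) (auto simp: is_loop_def)
  have vv: "v \<in> verts H" "v \<notin> leaves H" using wf_ends_sub[OF wf e(1,3)] loop_not_leaf[OF wf e] by auto
  have QO[simp]: "Orig u \<notin> Q" "Sub e1 u \<notin> Q" "Pend u i \<notin> Q" for u e1 i by (auto simp: Q_def)
  have QL[simp]: "LoopSub e1 b \<in> Q \<longleftrightarrow> e1 = e" for e1 b by (cases b) (auto simp: Q_def)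
  have qL[simp]: "q (LoopSub e1 b) = LAtt e b" for e1 b by (simp add: q_def)
  have ZM[simp]: "(Mid e1, x) \<in> Z \<longleftrightarrow> e1 = e \<and> (x = LoopSub e True \<or> x = LoopSub e False)" for e1 x
    by (auto simp: Z_def)
  have ZL[simp]: "(LAtt e1 b, x) \<in> Z \<longleftrightarrow> e1 = e \<and> x = Orig v" for e1 b x by (cases b) (auto simp: Z_def)
  have ZA[simp]: "(Att e1 u, x) \<notin> Z" "(PendE u i, x) \<notin> Z" for e1 u x i by (auto simp: Z_def)
  have D[simp]: "f \<in> Del \<longleftrightarrow> f = Mid (Mid e)" for f by (simp add: Del_def)
  have c1: "Q \<subseteq> verts G - leaves G" using e by (auto simp: G_def Q_def)
  have c2: "\<forall>x\<in>Q. q x \<in> edges G \<and> x \<in> ends G (q x) \<and> (q x, x) \<notin> Z \<and> Att (q x) x \<notin> Del \<and>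
                 (\<exists>g\<in>edges G. x \<in> ends G g \<and> (g,x) \<in> Z \<and> Att g x \<notin> Del)"
  proof
    fix x assume "x \<in> Q"
    then obtain b where xb: "x = LoopSub e b" by (auto simp: Q_def)
    have "Mid e \<in> edges G" "x \<in> ends G (Mid e)" using e xb by (cases b; simp add: G_def)+
    moreover have "(Mid e, x) \<in> Z" using xb by (cases b) simp_all
    moreover have "LAtt e b \<in> edges G" "x \<in> ends G (LAtt e b)" using e xb by (simp_all add: G_def)
    ultimately show "q x \<in> edges G \<and> x \<in> ends G (q x) \<and> (q x, x) \<notin> Z \<and> Att (q x) x \<notin> Del \<and>
                 (\<exists>g\<in>edges G. x \<in> ends G g \<and> (g,x) \<in> Z \<and> Att g x \<notin> Del)"
      using xb by auto
  qed
  have c3: "\<forall>g\<in>edges G. \<forall>x\<in>ends G g. (g,x) \<notin> Z \<longrightarrow> \<not>(x \<in> Q \<and> g = q x) \<longrightarrow>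
               (\<forall>y\<in>ends G g. y \<noteq> x \<longrightarrow> (g,y) \<notin> Z \<and> \<not>(y \<in> Q \<and> g = q y)) \<and> Mid g \<notin> Del \<and>
               (x \<in> leaves G \<or> (x \<notin> Q \<and> Att g x \<notin> Del))"
  proof (intro ballI impI)
    fix g x assume g: "g \<in> edges G" and x: "x \<in> ends G g" and nz: "(g,x) \<notin> Z" and nq: "\<not>(x \<in> Q \<and> g = q x)"
    from g[unfolded G_def] show "(\<forall>y\<in>ends G g. y \<noteq> x \<longrightarrow> (g,y) \<notin> Z \<and> \<not>(y \<in> Q \<and> g = q y)) \<and> Mid g \<notin> Del \<and>
               (x \<in> leaves G \<or> (x \<notin> Q \<and> Att g x \<notin> Del))"
    proof (cases rule: G_edges_cases)
      case (MidN e1 a b)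
      then have "e1 \<noteq> e" using e by auto
      moreover have "x = Sub e1 a \<or> x = Sub e1 b" using x MidN by (simp add: G_def)
      ultimately show ?thesis using MidN by (auto simp: G_def)
    next
      case (MidL e1 u)
      have "e1 \<noteq> e"
      proof
        assume "e1 = e"
        moreover obtain c where "x = LoopSub e1 c" using x MidL by (auto simp: G_def)
        ultimately show False using nz MidL(1) by (cases c) auto
      qed
      moreover obtain c where "x = LoopSub e1 c" using x MidL by (auto simp: G_def)
      ultimately show ?thesis using MidL by (auto simp: G_def)
    next
      case (Att e1 u)
      have "x = Orig u \<or> x = Sub e1 u" using x Att by (simp add: G_def)
      then show ?thesis using Att by (auto simp: G_def)
    next
      case (LAtt e1 b u)
      have xx: "x = LoopSub e1 b \<or> x = Orig u" using x LAtt by (simp add: G_def)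
      have "e1 \<noteq> e"
      proof
        assume ee: "e1 = e"
        then have "u = v" using LAtt ev by simp
        show False using xx nz nq ee LAtt(1) \<open>u = v\<close> by auto
      qed
      then show ?thesis using LAtt xx by (auto simp: G_def)
    next
      case (PendE u i e1)
      have gm: "Mid g \<notin> Del" using PendE by simp
      have e8: "ends G g = {Pend u i, Sub e1 u}" using PendE(8) by (simp add: G_def)
      have pl: "Pend u i \<in> leaves G" using PendE(2-4) by (simp add: G_def)
      from x e8 have "x = Pend u i \<or> x = Sub e1 u" by simp
      then show ?thesis
      proof
        assume "x = Pend u i" then show ?thesis using e8 pl gm PendE(1) by simp
      next
        assume "x = Sub e1 u" then show ?thesis using e8 gm PendE(1) by simp
      qed
    qed
  qed
  have c4: "\<forall>x\<in>Q. \<forall>y\<in>ends G (q x). y \<noteq> x \<longrightarrow> (q x, y) \<in> Z \<and> Mid (q x) \<notin> Del"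
  proof (intro ballI impI)
    fix x y assume "x \<in> Q" and y: "y \<in> ends G (q x)" "y \<noteq> x"
    then obtain b where xb: "x = LoopSub e b" by (auto simp: Q_def)
    then have "y = Orig v" using y ev by (simp add: G_def)
    then show "(q x, y) \<in> Z \<and> Mid (q x) \<notin> Del" using xb by simp
  qed
  have c5: "\<forall>g\<in>edges G. \<forall>x\<in>ends G g. (g,x) \<in> Z \<longrightarrow>
               (x \<in> Q \<and> Att g x \<notin> Del) \<or> (\<exists>y\<in>ends G g. y \<noteq> x \<and> (g,y) \<notin> Z \<and> Mid g \<notin> Del)"
  proof (intro ballI impI)
    fix g x assume g: "g \<in> edges G" and x: "x \<in> ends G g" and z: "(g,x) \<in> Z"
    then consider b where "g = Mid e" "x = LoopSub e b" | b where "g = LAtt e b" "x = Orig v"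
      by (auto simp: Z_def)
    then show "(x \<in> Q \<and> Att g x \<notin> Del) \<or> (\<exists>y\<in>ends G g. y \<noteq> x \<and> (g,y) \<notin> Z \<and> Mid g \<notin> Del)"
    proof cases
      case 1 then show ?thesis by simp
    next
      case (2 b)
      have "LoopSub e b \<in> ends G g" using 2 by (simp add: G_def)
      then show ?thesis using 2 by (auto intro!: bexI[of _ "LoopSub e b"])
    qed
  qed
  have c6: "\<forall>x\<in>verts G - leaves G. x \<notin> Q \<longrightarrow> (\<exists>g\<in>edges G. x \<in> ends G g \<and> (g,x) \<notin> Z \<and> Att g x \<notin> Del)"
  proof (intro ballI impI)
    fix x assume x: "x \<in> verts G - leaves G" and nq: "x \<notin> Q"
    from x[unfolded G_def] have "x \<in> verts (S2 H \<alpha>)" by simp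
    then show "\<exists>g\<in>edges G. x \<in> ends G g \<and> (g,x) \<notin> Z \<and> Att g x \<notin> Del"
    proof (cases rule: G_verts_cases)
      case (Orig u)
      obtain e1 where e1: "e1 \<in> edges H" "u \<in> ends H e1" "u = v \<longrightarrow> e1 \<noteq> e"
      proof (cases "u = v")
        case True then show ?thesis using that e' by blast
      next
        case False then show ?thesis using that ni Orig by blast
      qed
      show ?thesis
      proof (cases "is_loop H e1")
        case True then show ?thesis using e1 Orig by (auto simp: G_def intro!: bexI[of _ "LAtt e1 True"])
      next
        case False then show ?thesis using e1 Orig by (auto simp: G_def intro!: bexI[of _ "Att e1 u"])
      qed
    next
      case (Pend u i) then show ?thesis using x by (simp add: G_def)
    next
      case (Sub e1 u) then show ?thesis by (auto simp: G_def intro!: bexI[of _ "Mid e1"])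
    next
      case (LoopSub e1 b)
      then have "e1 \<noteq> e" using nq by auto
      then show ?thesis using LoopSub by (auto simp: G_def intro!: bexI[of _ "Mid e1"])
    qed
  qed
  have c7: "\<forall>x\<in>leaves G. (\<forall>g\<in>edges G. x \<in> ends G g \<longrightarrow> (g,x) \<notin> Z) \<and> (\<forall>k. PendE x k \<notin> Del)"
  proof (intro ballI conjI allI impI)
    fix x g assume x: "x \<in> leaves G" and g: "g \<in> edges G" "x \<in> ends G g"
    obtain u i where "x = Pend u i" using x S2_leaves[OF wf al] by (auto simp: G_def)
    then have "g = PendE u i" using Pend_in_ends_S2 g by (simp add: G_def)
    then show "(g,x) \<notin> Z" by simp
  next
    fix x k show "PendE x k \<notin> Del" by simp
  qed
  show ?thesis using recolor[OF S2_wf[OF wf] S2_noloop[OF wf] be S2_noiso[OF wf ni], of Q q Z Del]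
      c1 c2 c3 c4 c5 c6 c7 unfolding G_def Del_def by blast
qed

end

lemma K_edges_cases:
  assumes wf: "wf_mgraph G" and nl: "\<forall>g\<in>edges G. card (ends G g) = 2"
    and f: "f \<in> edges (S2 G \<beta>)"
  obtains (Mid) g x y where "f = Mid g" "g \<in> edges G" "ends G g = {x,y}" "x \<noteq> y"
      "ends (S2 G \<beta>) f = {Sub g x, Sub g y}"
    | (Att) g x where "f = Att g x" "g \<in> edges G" "x \<in> ends G g" "x \<notin> leaves G"
      "ends (S2 G \<beta>) f = {Orig x, Sub g x}"
    | (PendE) x k g where "f = PendE x k" "x \<in> leaves G" "1 \<le> k" "k \<le> \<beta> x" "g \<in> edges G" "x \<in> ends G g"
      "ends (S2 G \<beta>) f = {Pend x k, Sub g x}"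
proof -
  have nloop: "\<not> is_loop G g" if "g \<in> edges G" for g using nl that by (auto simp: is_loop_def)
  from f show ?thesis
  proof (cases rule: S2_edges_cases)
    case (Mid g)
    obtain x where x: "x \<in> ends G g" using wf Mid(2) by (cases rule: wf_endsE) auto
    obtain y where "y \<noteq> x" "ends G g = {x, y}" using two_ends nl Mid x by metis
    then show ?thesis using that(1)[of g x y] Mid nloop by auto
  next
    case (Att g x) then show ?thesis using that(2) by simp
  next
    case (LAtt g b) then show ?thesis using nloop by simp
  next
    case (PendE x k)
    obtain g where g: "g \<in> edges G" "x \<in> ends G g" using leaf_edge[OF wf PendE(2)] by metis
    show ?thesis using that(3)[OF PendE(1-4) g] S2_ends_PendE[OF wf PendE(2) g] PendE(1) by simp
  qed
qed

lemma K_nbr: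
  assumes wf: "wf_mgraph G" and nl: "\<forall>g\<in>edges G. card (ends G g) = 2"
    and F: "F \<subseteq> edges (S2 G \<beta>)" and a: "adj ((S2 G \<beta>)\<lparr>edges := F\<rparr>) a b"
  shows "(\<exists>g x y. Mid g \<in> F \<and> g \<in> edges G \<and> ends G g = {x,y} \<and> x \<noteq> y \<and> a = Sub g x \<and> b = Sub g y) \<or>
         (\<exists>g x. Att g x \<in> F \<and> g \<in> edges G \<and> x \<in> ends G g \<and> x \<notin> leaves G \<and>
              ((a = Orig x \<and> b = Sub g x) \<or> (a = Sub g x \<and> b = Orig x))) \<or>
         (\<exists>x k g. PendE x k \<in> F \<and> x \<in> leaves G \<and> 1 \<le> k \<and> k \<le> \<beta> x \<and> g \<in> edges G \<and> x \<in> ends G g \<and>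
              ((a = Pend x k \<and> b = Sub g x) \<or> (a = Sub g x \<and> b = Pend x k)))"
proof -
  obtain f where f: "f \<in> F" "ends (S2 G \<beta>) f = {a, b}" using a unfolding adj_def by auto
  have fe: "f \<in> edges (S2 G \<beta>)" using f F by blast
  show ?thesis using wf nl fe
  proof (cases rule: K_edges_cases)
    case (Mid g x y)
    then have "(a = Sub g x \<and> b = Sub g y) \<or> (a = Sub g y \<and> b = Sub g x)" using f(2) by (auto simp: doubleton_eq_iff)
    then show ?thesis
    proof
      assume "a = Sub g x \<and> b = Sub g y" then show ?thesis using Mid f(1) by blast
    next
      assume "a = Sub g y \<and> b = Sub g x" then show ?thesis using Mid f(1)
        by (metis insert_commute)
    qed
  next
    case (Att g x)
    then have "(a = Orig x \<and> b = Sub g x) \<or> (a = Sub g x \<and> b = Orig x)" using f(2) by (auto simp: doubleton_eq_iff)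
    then show ?thesis using Att f(1) by blast
  next
    case (PendE x k g)
    then have "(a = Pend x k \<and> b = Sub g x) \<or> (a = Sub g x \<and> b = Pend x k)" using f(2) by (auto simp: doubleton_eq_iff)
    then show ?thesis using PendE f(1) by blast
  qed
qed

lemma C9_prop:
  fixes p0 p1 p2 p3 p4 p5 p6 p7 p8 f0 f1 f2 f3 f4 f5 f6 f7 f8 :: bool
  assumes "(f8 \<and> (p8 \<longleftrightarrow> \<not> p0)) \<or> (f0 \<and> (p1 \<longleftrightarrow> \<not> p0))"
    and "p0 \<longrightarrow> (f8 \<and> p8) \<or> (f0 \<and> p1)"
    and "(f0 \<and> (p0 \<longleftrightarrow> \<not> p1)) \<or> (f1 \<and> (p2 \<longleftrightarrow> \<not> p1))"
    and "p1 \<longrightarrow> (f0 \<and> p0) \<or> (f1 \<and> p2)"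
    and "(f1 \<and> (p1 \<longleftrightarrow> \<not> p2)) \<or> (f2 \<and> (p3 \<longleftrightarrow> \<not> p2))"
    and "p2 \<longrightarrow> (f1 \<and> p1) \<or> (f2 \<and> p3)"
    and "(f2 \<and> (p2 \<longleftrightarrow> \<not> p3)) \<or> (f3 \<and> (p4 \<longleftrightarrow> \<not> p3))"
    and "p3 \<longrightarrow> (f2 \<and> p2) \<or> (f3 \<and> p4)"
    and "(f3 \<and> (p3 \<longleftrightarrow> \<not> p4)) \<or> (f4 \<and> (p5 \<longleftrightarrow> \<not> p4))"
    and "p4 \<longrightarrow> (f3 \<and> p3) \<or> (f4 \<and> p5)"
    and "(f4 \<and> (p4 \<longleftrightarrow> \<not> p5)) \<or> (f5 \<and> (p6 \<longleftrightarrow> \<not> p5))"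
    and "p5 \<longrightarrow> (f4 \<and> p4) \<or> (f5 \<and> p6)"
    and "(f5 \<and> (p5 \<longleftrightarrow> \<not> p6)) \<or> (f6 \<and> (p7 \<longleftrightarrow> \<not> p6))"
    and "p6 \<longrightarrow> (f5 \<and> p5) \<or> (f6 \<and> p7)"
    and "(f6 \<and> (p6 \<longleftrightarrow> \<not> p7)) \<or> (f7 \<and> (p8 \<longleftrightarrow> \<not> p7))"
    and "p7 \<longrightarrow> (f6 \<and> p6) \<or> (f7 \<and> p8)"
    and "(f7 \<and> (p7 \<longleftrightarrow> \<not> p8)) \<or> (f8 \<and> (p0 \<longleftrightarrow> \<not> p8))"
    and "p8 \<longrightarrow> (f7 \<and> p7) \<or> (f8 \<and> p0)"
  shows "f0 \<and> f1 \<and> f2 \<and> f3 \<and> f4 \<and> f5 \<and> f6 \<and> f7 \<and> f8"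
  using assms by sat


context
  fixes H :: "('v,'e) mgraph" and \<alpha> :: "'v \<Rightarrow> nat"
  assumes wf: "wf_mgraph H" and al: "\<forall>v\<in>leaves H. 1 \<le> \<alpha> v"
begin

lemma std_DPDP:
  fixes \<beta> :: "('v,'e) s2v \<Rightarrow> nat"
  assumes be: "\<forall>x\<in>leaves (S2 H \<alpha>). 1 \<le> \<beta> x" and ni: "\<forall>v\<in>verts H. \<exists>e\<in>edges H. v \<in> ends H e"
  shows "DPDP (S2 (S2 H \<alpha>) \<beta>)"
proof -
  have "DPDP ((S2 (S2 H \<alpha>) \<beta>)\<lparr>edges := edges (S2 (S2 H \<alpha>) \<beta>) - {}\<rparr>)"
    by (rule recolor[OF S2_wf[OF wf] S2_noloop[OF wf] be S2_noiso[OF wf ni], of "{}" undefined "{}" "{}"])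
      (use S2_noiso[OF wf ni] in auto)
  then show ?thesis by simp
qed

lemma loop_min:
  fixes \<beta> :: "('v,'e) s2v \<Rightarrow> nat"
  assumes E: "edges H = {e}" "ends H e = {v}" "verts H = {v}" and be: "\<forall>x\<in>leaves (S2 H \<alpha>). 1 \<le> \<beta> x"
  shows "minimal_DPDP (S2 (S2 H \<alpha>) \<beta>)"
proof -
  have lp: "is_loop H e" using E by (simp add: is_loop_def)
  have ni: "\<forall>u\<in>verts H. \<exists>e'\<in>edges H. u \<in> ends H e'" using E by auto
  have vnl: "v \<notin> leaves H" using loop_not_leaf[OF wf _ lp] E by auto
  have lH: "leaves H = {}" using vnl leaves_sub[of H] E by auto
  define G where "G = S2 H \<alpha>"
  have EG: "g \<in> edges G \<longleftrightarrow> g = Mid e \<or> g = LAtt e True \<or> g = LAtt e False" for g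
    by (cases g) (auto simp: G_def E lp lH)
  have endsG: "ends G (Mid e) = {LoopSub e True, LoopSub e False}" "ends G (LAtt e b) = {LoopSub e b, Orig v}" for b
    by (simp_all add: G_def lp E)
  have lG: "leaves G = {}" using S2_leaves[OF wf al] lH by (simp add: G_def)
  have wfG: "wf_mgraph G" using S2_wf[OF wf] by (simp add: G_def)
  have nlG: "\<forall>g\<in>edges G. card (ends G g) = 2" using S2_noloop[OF wf] by (simp add: G_def)
  have nloopG: "\<not> is_loop G g" if "g \<in> edges G" for g using nlG that by (auto simp: is_loop_def)
  have vG: "Orig v \<in> verts G" "LoopSub e b \<in> verts G" for b using E vnl lp by (simp_all add: G_def)
  let ?K = "S2 G \<beta>"
  have "DPDP ?K" using std_DPDP[OF be ni] by (simp add: G_def)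
  moreover have "\<not> DPDP (?K\<lparr>edges := F\<rparr>)" if Fs: "F \<subset> edges ?K" for F
  proof
    assume D: "DPDP (?K\<lparr>edges := F\<rparr>)"
    obtain P where P: "P \<subseteq> verts ?K"
      and opp: "\<And>a. a \<in> verts ?K \<Longrightarrow> \<exists>b. adj (?K\<lparr>edges := F\<rparr>) a b \<and> (b \<in> P \<longleftrightarrow> a \<notin> P)"
      and pn: "\<And>a. a \<in> P \<Longrightarrow> \<exists>b. b \<noteq> a \<and> adj (?K\<lparr>edges := F\<rparr>) a b \<and> b \<in> P"
      using weak_DPDP[OF D] by auto
    have Fsub: "F \<subseteq> edges ?K" using Fs by blast
    note nb = K_nbr[OF wfG nlG Fsub]
    have n0: "(b = Sub (LAtt e False) (Orig v) \<and> Att (LAtt e False) (Orig v) \<in> F) \<or> (b = Sub (LAtt e True) (Orig v) \<and> Att (LAtt e True) (Orig v) \<in> F)" if "adj (?K\<lparr>edges := F\<rparr>) (Orig (Orig v)) b" for b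
      using nb[OF that] by (auto simp: EG endsG lG doubleton_eq_iff)
    have v0: "Orig (Orig v) \<in> verts ?K" using vG EG endsG nloopG by (simp add: lG)
    have o0: "(Att (LAtt e False) (Orig v) \<in> F \<and> (Sub (LAtt e False) (Orig v) \<in> P \<longleftrightarrow> \<not> Orig (Orig v) \<in> P)) \<or> (Att (LAtt e True) (Orig v) \<in> F \<and> (Sub (LAtt e True) (Orig v) \<in> P \<longleftrightarrow> \<not> Orig (Orig v) \<in> P))"
      using opp[OF v0] n0 by blast
    have p0: "Orig (Orig v) \<in> P \<longrightarrow> (Att (LAtt e False) (Orig v) \<in> F \<and> Sub (LAtt e False) (Orig v) \<in> P) \<or> (Att (LAtt e True) (Orig v) \<in> F \<and> Sub (LAtt e True) (Orig v) \<in> P)"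
      using pn n0 by blast
    have n1: "(b = Orig (Orig v) \<and> Att (LAtt e True) (Orig v) \<in> F) \<or> (b = Sub (LAtt e True) (LoopSub e True) \<and> Mid (LAtt e True) \<in> F)" if "adj (?K\<lparr>edges := F\<rparr>) (Sub (LAtt e True) (Orig v)) b" for b
      using nb[OF that] by (auto simp: EG endsG lG doubleton_eq_iff)
    have v1: "Sub (LAtt e True) (Orig v) \<in> verts ?K" using vG EG endsG nloopG by (simp add: lG)
    have o1: "(Att (LAtt e True) (Orig v) \<in> F \<and> (Orig (Orig v) \<in> P \<longleftrightarrow> \<not> Sub (LAtt e True) (Orig v) \<in> P)) \<or> (Mid (LAtt e True) \<in> F \<and> (Sub (LAtt e True) (LoopSub e True) \<in> P \<longleftrightarrow> \<not> Sub (LAtt e True) (Orig v) \<in> P))"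
      using opp[OF v1] n1 by blast
    have p1: "Sub (LAtt e True) (Orig v) \<in> P \<longrightarrow> (Att (LAtt e True) (Orig v) \<in> F \<and> Orig (Orig v) \<in> P) \<or> (Mid (LAtt e True) \<in> F \<and> Sub (LAtt e True) (LoopSub e True) \<in> P)"
      using pn n1 by blast
    have n2: "(b = Sub (LAtt e True) (Orig v) \<and> Mid (LAtt e True) \<in> F) \<or> (b = Orig (LoopSub e True) \<and> Att (LAtt e True) (LoopSub e True) \<in> F)" if "adj (?K\<lparr>edges := F\<rparr>) (Sub (LAtt e True) (LoopSub e True)) b" for b
      using nb[OF that] by (auto simp: EG endsG lG doubleton_eq_iff)
    have v2: "Sub (LAtt e True) (LoopSub e True) \<in> verts ?K" using vG EG endsG nloopG by (simp add: lG)
    have o2: "(Mid (LAtt e True) \<in> F \<and> (Sub (LAtt e True) (Orig v) \<in> P \<longleftrightarrow> \<not> Sub (LAtt e True) (LoopSub e True) \<in> P)) \<or> (Att (LAtt e True) (LoopSub e True) \<in> F \<and> (Orig (LoopSub e True) \<in> P \<longleftrightarrow> \<not> Sub (LAtt e True) (LoopSub e True) \<in> P))"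
      using opp[OF v2] n2 by blast
    have p2: "Sub (LAtt e True) (LoopSub e True) \<in> P \<longrightarrow> (Mid (LAtt e True) \<in> F \<and> Sub (LAtt e True) (Orig v) \<in> P) \<or> (Att (LAtt e True) (LoopSub e True) \<in> F \<and> Orig (LoopSub e True) \<in> P)"
      using pn n2 by blast
    have n3: "(b = Sub (LAtt e True) (LoopSub e True) \<and> Att (LAtt e True) (LoopSub e True) \<in> F) \<or> (b = Sub (Mid e) (LoopSub e True) \<and> Att (Mid e) (LoopSub e True) \<in> F)" if "adj (?K\<lparr>edges := F\<rparr>) (Orig (LoopSub e True)) b" for b
      using nb[OF that] by (auto simp: EG endsG lG doubleton_eq_iff)
    have v3: "Orig (LoopSub e True) \<in> verts ?K" using vG EG endsG nloopG by (simp add: lG)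
    have o3: "(Att (LAtt e True) (LoopSub e True) \<in> F \<and> (Sub (LAtt e True) (LoopSub e True) \<in> P \<longleftrightarrow> \<not> Orig (LoopSub e True) \<in> P)) \<or> (Att (Mid e) (LoopSub e True) \<in> F \<and> (Sub (Mid e) (LoopSub e True) \<in> P \<longleftrightarrow> \<not> Orig (LoopSub e True) \<in> P))"
      using opp[OF v3] n3 by blast
    have p3: "Orig (LoopSub e True) \<in> P \<longrightarrow> (Att (LAtt e True) (LoopSub e True) \<in> F \<and> Sub (LAtt e True) (LoopSub e True) \<in> P) \<or> (Att (Mid e) (LoopSub e True) \<in> F \<and> Sub (Mid e) (LoopSub e True) \<in> P)"
      using pn n3 by blast
    have n4: "(b = Orig (LoopSub e True) \<and> Att (Mid e) (LoopSub e True) \<in> F) \<or> (b = Sub (Mid e) (LoopSub e False) \<and> Mid (Mid e) \<in> F)" if "adj (?K\<lparr>edges := F\<rparr>) (Sub (Mid e) (LoopSub e True)) b" for b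
      using nb[OF that] by (auto simp: EG endsG lG doubleton_eq_iff)
    have v4: "Sub (Mid e) (LoopSub e True) \<in> verts ?K" using vG EG endsG nloopG by (simp add: lG)
    have o4: "(Att (Mid e) (LoopSub e True) \<in> F \<and> (Orig (LoopSub e True) \<in> P \<longleftrightarrow> \<not> Sub (Mid e) (LoopSub e True) \<in> P)) \<or> (Mid (Mid e) \<in> F \<and> (Sub (Mid e) (LoopSub e False) \<in> P \<longleftrightarrow> \<not> Sub (Mid e) (LoopSub e True) \<in> P))"
      using opp[OF v4] n4 by blast
    have p4: "Sub (Mid e) (LoopSub e True) \<in> P \<longrightarrow> (Att (Mid e) (LoopSub e True) \<in> F \<and> Orig (LoopSub e True) \<in> P) \<or> (Mid (Mid e) \<in> F \<and> Sub (Mid e) (LoopSub e False) \<in> P)"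
      using pn n4 by blast
    have n5: "(b = Sub (Mid e) (LoopSub e True) \<and> Mid (Mid e) \<in> F) \<or> (b = Orig (LoopSub e False) \<and> Att (Mid e) (LoopSub e False) \<in> F)" if "adj (?K\<lparr>edges := F\<rparr>) (Sub (Mid e) (LoopSub e False)) b" for b
      using nb[OF that] by (auto simp: EG endsG lG doubleton_eq_iff)
    have v5: "Sub (Mid e) (LoopSub e False) \<in> verts ?K" using vG EG endsG nloopG by (simp add: lG)
    have o5: "(Mid (Mid e) \<in> F \<and> (Sub (Mid e) (LoopSub e True) \<in> P \<longleftrightarrow> \<not> Sub (Mid e) (LoopSub e False) \<in> P)) \<or> (Att (Mid e) (LoopSub e False) \<in> F \<and> (Orig (LoopSub e False) \<in> P \<longleftrightarrow> \<not> Sub (Mid e) (LoopSub e False) \<in> P))"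
      using opp[OF v5] n5 by blast
    have p5: "Sub (Mid e) (LoopSub e False) \<in> P \<longrightarrow> (Mid (Mid e) \<in> F \<and> Sub (Mid e) (LoopSub e True) \<in> P) \<or> (Att (Mid e) (LoopSub e False) \<in> F \<and> Orig (LoopSub e False) \<in> P)"
      using pn n5 by blast
    have n6: "(b = Sub (Mid e) (LoopSub e False) \<and> Att (Mid e) (LoopSub e False) \<in> F) \<or> (b = Sub (LAtt e False) (LoopSub e False) \<and> Att (LAtt e False) (LoopSub e False) \<in> F)" if "adj (?K\<lparr>edges := F\<rparr>) (Orig (LoopSub e False)) b" for b
      using nb[OF that] by (auto simp: EG endsG lG doubleton_eq_iff)
    have v6: "Orig (LoopSub e False) \<in> verts ?K" using vG EG endsG nloopG by (simp add: lG)
    have o6: "(Att (Mid e) (LoopSub e False) \<in> F \<and> (Sub (Mid e) (LoopSub e False) \<in> P \<longleftrightarrow> \<not> Orig (LoopSub e False) \<in> P)) \<or> (Att (LAtt e False) (LoopSub e False) \<in> F \<and> (Sub (LAtt e False) (LoopSub e False) \<in> P \<longleftrightarrow> \<not> Orig (LoopSub e False) \<in> P))"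
      using opp[OF v6] n6 by blast
    have p6: "Orig (LoopSub e False) \<in> P \<longrightarrow> (Att (Mid e) (LoopSub e False) \<in> F \<and> Sub (Mid e) (LoopSub e False) \<in> P) \<or> (Att (LAtt e False) (LoopSub e False) \<in> F \<and> Sub (LAtt e False) (LoopSub e False) \<in> P)"
      using pn n6 by blast
    have n7: "(b = Orig (LoopSub e False) \<and> Att (LAtt e False) (LoopSub e False) \<in> F) \<or> (b = Sub (LAtt e False) (Orig v) \<and> Mid (LAtt e False) \<in> F)" if "adj (?K\<lparr>edges := F\<rparr>) (Sub (LAtt e False) (LoopSub e False)) b" for b
      using nb[OF that] by (auto simp: EG endsG lG doubleton_eq_iff)
    have v7: "Sub (LAtt e False) (LoopSub e False) \<in> verts ?K" using vG EG endsG nloopG by (simp add: lG)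
    have o7: "(Att (LAtt e False) (LoopSub e False) \<in> F \<and> (Orig (LoopSub e False) \<in> P \<longleftrightarrow> \<not> Sub (LAtt e False) (LoopSub e False) \<in> P)) \<or> (Mid (LAtt e False) \<in> F \<and> (Sub (LAtt e False) (Orig v) \<in> P \<longleftrightarrow> \<not> Sub (LAtt e False) (LoopSub e False) \<in> P))"
      using opp[OF v7] n7 by blast
    have p7: "Sub (LAtt e False) (LoopSub e False) \<in> P \<longrightarrow> (Att (LAtt e False) (LoopSub e False) \<in> F \<and> Orig (LoopSub e False) \<in> P) \<or> (Mid (LAtt e False) \<in> F \<and> Sub (LAtt e False) (Orig v) \<in> P)"
      using pn n7 by blast
    have n8: "(b = Sub (LAtt e False) (LoopSub e False) \<and> Mid (LAtt e False) \<in> F) \<or> (b = Orig (Orig v) \<and> Att (LAtt e False) (Orig v) \<in> F)" if "adj (?K\<lparr>edges := F\<rparr>) (Sub (LAtt e False) (Orig v)) b" for b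
      using nb[OF that] by (auto simp: EG endsG lG doubleton_eq_iff)
    have v8: "Sub (LAtt e False) (Orig v) \<in> verts ?K" using vG EG endsG nloopG by (simp add: lG)
    have o8: "(Mid (LAtt e False) \<in> F \<and> (Sub (LAtt e False) (LoopSub e False) \<in> P \<longleftrightarrow> \<not> Sub (LAtt e False) (Orig v) \<in> P)) \<or> (Att (LAtt e False) (Orig v) \<in> F \<and> (Orig (Orig v) \<in> P \<longleftrightarrow> \<not> Sub (LAtt e False) (Orig v) \<in> P))"
      using opp[OF v8] n8 by blast
    have p8: "Sub (LAtt e False) (Orig v) \<in> P \<longrightarrow> (Mid (LAtt e False) \<in> F \<and> Sub (LAtt e False) (LoopSub e False) \<in> P) \<or> (Att (LAtt e False) (Orig v) \<in> F \<and> Orig (Orig v) \<in> P)"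
      using pn n8 by blast
    have allF: "Att (LAtt e True) (Orig v) \<in> F \<and> Mid (LAtt e True) \<in> F \<and> Att (LAtt e True) (LoopSub e True) \<in> F \<and> Att (Mid e) (LoopSub e True) \<in> F \<and> Mid (Mid e) \<in> F \<and> Att (Mid e) (LoopSub e False) \<in> F \<and> Att (LAtt e False) (LoopSub e False) \<in> F \<and> Mid (LAtt e False) \<in> F \<and> Att (LAtt e False) (Orig v) \<in> F"
      by (rule C9_prop[OF o0 p0 o1 p1 o2 p2 o3 p3 o4 p4 o5 p5 o6 p6 o7 p7 o8 p8])
    have "edges ?K \<subseteq> F"
    proof
      fix g assume g: "g \<in> edges ?K"
      from wfG nlG g show "g \<in> F"
      proof (cases rule: K_edges_cases)
        case (Mid h x y) then show ?thesis using allF by (auto simp: EG endsG doubleton_eq_iff)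
      next
        case (Att h x) then show ?thesis using allF by (auto simp: EG endsG)
      next
        case (PendE x k h) then show ?thesis by (simp add: lG)
      qed
    qed
    then show False using Fs by blast
  qed
  ultimately show ?thesis unfolding minimal_DPDP_def G_def by blast
qed


lemma edge_min:
  fixes \<beta> :: "('v,'e) s2v \<Rightarrow> nat"
  assumes E: "edges H = {e}" "ends H e = {u,v}" "u \<noteq> v" "verts H = {u,v}"
    and be: "\<forall>x\<in>leaves (S2 H \<alpha>). 1 \<le> \<beta> x"
  shows "minimal_DPDP (S2 (S2 H \<alpha>) \<beta>)"
proof -
  have nlp: "\<not> is_loop H e" using E by (simp add: is_loop_def)
  have ni: "\<forall>x\<in>verts H. \<exists>e'\<in>edges H. x \<in> ends H e'" using E by auto
  have deg1: "degree H w = 1" if "w \<in> {u,v}" for w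
  proof -
    have A: "{e'\<in>edges H. w \<in> ends H e' \<and> \<not> is_loop H e'} = {e}" using E nlp that by auto
    have B: "{e'\<in>edges H. is_loop H e' \<and> w \<in> ends H e'} = {}" using E nlp by auto
    show ?thesis unfolding degree_alt[OF wf] A B by simp
  qed
  have lH: "leaves H = {u,v}" using deg1 E(4) by (auto simp: leaves_def)
  have a1: "1 \<le> \<alpha> w" if "w \<in> {u,v}" for w using al lH that by blast
  define G where "G = S2 H \<alpha>"
  have EG: "g \<in> edges G \<longleftrightarrow> g = Mid e \<or> (\<exists>i. g = PendE u i \<and> 1 \<le> i \<and> i \<le> \<alpha> u)
                \<or> (\<exists>i. g = PendE v i \<and> 1 \<le> i \<and> i \<le> \<alpha> v)" for g
    by (cases g) (auto simp: G_def E lH nlp)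
  have endsM: "ends G (Mid e) = {Sub e u, Sub e v}" using E nlp by (simp add: G_def)
  have endsP: "ends G (PendE w i) = {Pend w i, Sub e w}" if "w \<in> {u,v}" for w i
    using S2_ends_PendE[OF wf, of w e \<alpha> i] that E lH by (auto simp: G_def)
  have lG: "x \<in> leaves G \<longleftrightarrow> (\<exists>w i. x = Pend w i \<and> w \<in> {u,v} \<and> 1 \<le> i \<and> i \<le> \<alpha> w)" for x
    using S2_leaves[OF wf al] lH by (auto simp: G_def)
  have lGs[simp]: "Orig x \<notin> leaves G" "Sub g x \<notin> leaves G" for g x by (auto simp: lG)
  have wfG: "wf_mgraph G" using S2_wf[OF wf] by (simp add: G_def)
  have nlG: "\<forall>g\<in>edges G. card (ends G g) = 2" using S2_noloop[OF wf] by (simp add: G_def)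
  have nloopG: "\<not> is_loop G g" if "g \<in> edges G" for g using nlG that by (auto simp: is_loop_def)
  have bP: "1 \<le> \<beta> (Pend w i)" if "w \<in> {u,v}" "1 \<le> i" "i \<le> \<alpha> w" for w i
    using be that lG by (auto simp: G_def)
  let ?K = "S2 G \<beta>"
  have "DPDP ?K" using std_DPDP[OF be ni] by (simp add: G_def)
  moreover have "\<not> DPDP (?K\<lparr>edges := F\<rparr>)" if Fs: "F \<subset> edges ?K" for F
  proof
    assume D: "DPDP (?K\<lparr>edges := F\<rparr>)"
    obtain P where P: "P \<subseteq> verts ?K"
      and opp: "\<And>a. a \<in> verts ?K \<Longrightarrow> \<exists>b. adj (?K\<lparr>edges := F\<rparr>) a b \<and> (b \<in> P \<longleftrightarrow> a \<notin> P)"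
      and pn: "\<And>a. a \<in> P \<Longrightarrow> \<exists>b. b \<noteq> a \<and> adj (?K\<lparr>edges := F\<rparr>) a b \<and> b \<in> P"
      using weak_DPDP[OF D] by auto
    have Fsub: "F \<subseteq> edges ?K" using Fs by blast
    note nb = K_nbr[OF wfG nlG Fsub]
    have side: "Orig (Sub e w) \<notin> P \<and> Mid (PendE w i) \<in> F \<and> Att (PendE w i) (Sub e w) \<in> F \<and>
        (\<forall>k. 1 \<le> k \<and> k \<le> \<beta> (Pend w i) \<longrightarrow> PendE (Pend w i) k \<in> F)"
      if w: "w \<in> {u,v}" and i: "1 \<le> i" "i \<le> \<alpha> w" for w i
    proof -
      have PeG: "PendE w i \<in> edges G" using w i EG by auto
      have eP: "ends G (PendE w i) = {Pend w i, Sub e w}" using endsP[OF w] .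
      have N1: "b = Sub (PendE w i) (Pend w i) \<and> PendE (Pend w i) k \<in> F"
        if "adj (?K\<lparr>edges := F\<rparr>) (Pend (Pend w i) k) b" for k b
        using nb[OF that] w by (auto simp: EG endsM endsP doubleton_eq_iff)
      have N2: "(b = Sub (PendE w i) (Sub e w) \<and> Mid (PendE w i) \<in> F) \<or>
                (\<exists>k. b = Pend (Pend w i) k \<and> 1 \<le> k \<and> k \<le> \<beta> (Pend w i))"
        if "adj (?K\<lparr>edges := F\<rparr>) (Sub (PendE w i) (Pend w i)) b" for b
        using nb[OF that] w E(3) by (auto simp: EG endsM endsP doubleton_eq_iff lG)
      have N3: "(b = Sub (PendE w i) (Pend w i) \<and> Mid (PendE w i) \<in> F) \<or>
                (b = Orig (Sub e w) \<and> Att (PendE w i) (Sub e w) \<in> F)"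
        if "adj (?K\<lparr>edges := F\<rparr>) (Sub (PendE w i) (Sub e w)) b" for b
        using nb[OF that] w E(3) by (auto simp: EG endsM endsP doubleton_eq_iff lG)
      have vt': "Sub (PendE w i) (Pend w i) \<in> verts ?K" using PeG nloopG eP by simp
      have vt: "Sub (PendE w i) (Sub e w) \<in> verts ?K" using PeG nloopG eP by simp
      have pk: "Pend (Pend w i) k \<notin> P \<and> Sub (PendE w i) (Pend w i) \<in> P \<and> PendE (Pend w i) k \<in> F"
        if k: "1 \<le> k" "k \<le> \<beta> (Pend w i)" for k
      proof -
        have vk: "Pend (Pend w i) k \<in> verts ?K" using k w i lG by auto
        obtain b where b: "adj (?K\<lparr>edges := F\<rparr>) (Pend (Pend w i) k) b" "b \<in> P \<longleftrightarrow> Pend (Pend w i) k \<notin> P"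
          using opp[OF vk] by blast
        have bb: "b = Sub (PendE w i) (Pend w i)" "PendE (Pend w i) k \<in> F" using N1[OF b(1)] by auto
        have "Pend (Pend w i) k \<notin> P"
        proof
          assume pin: "Pend (Pend w i) k \<in> P"
          obtain b' where "adj (?K\<lparr>edges := F\<rparr>) (Pend (Pend w i) k) b'" "b' \<in> P" using pn[OF pin] by blast
          then have "Sub (PendE w i) (Pend w i) \<in> P" using N1 by blast
          then show False using b bb pin by simp
        qed
        then show ?thesis using b bb by simp
      qed
      have t'P: "Sub (PendE w i) (Pend w i) \<in> P" using pk[of 1] bP[OF w i] by simp
      obtain b where b: "b \<noteq> Sub (PendE w i) (Pend w i)" "adj (?K\<lparr>edges := F\<rparr>) (Sub (PendE w i) (Pend w i)) b" "b \<in> P"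
        using pn[OF t'P] by blast
      have tP: "Sub (PendE w i) (Sub e w) \<in> P" "Mid (PendE w i) \<in> F"
        using N2[OF b(2)] b(3) pk by auto
      obtain c where c: "adj (?K\<lparr>edges := F\<rparr>) (Sub (PendE w i) (Sub e w)) c" "c \<in> P \<longleftrightarrow> Sub (PendE w i) (Sub e w) \<notin> P"
        using opp[OF vt] by blast
      have "c = Orig (Sub e w) \<and> Att (PendE w i) (Sub e w) \<in> F" using N3[OF c(1)] c(2) tP t'P by auto
      then show ?thesis using c(2) tP pk by auto
    qed
    have Onp: "Orig (Sub e w) \<notin> P" if "w \<in> {u,v}" for w using side[OF that, of 1] a1[OF that] by simp
    have N4: "(b = Sub (Mid e) (Sub e w') \<and> Mid (Mid e) \<in> F) \<or> (b = Orig (Sub e w) \<and> Att (Mid e) (Sub e w) \<in> F)"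
      if w: "{w, w'} = {u,v}" "w \<noteq> w'" and a: "adj (?K\<lparr>edges := F\<rparr>) (Sub (Mid e) (Sub e w)) b" for w w' b
      using nb[OF a] w E(3) by (auto simp: EG endsM endsP doubleton_eq_iff lG)
    have vm: "Sub (Mid e) (Sub e w) \<in> verts ?K" if "w \<in> {u,v}" for w
      using that EG nloopG endsM by auto
    have mP: "Sub (Mid e) (Sub e w) \<in> P" if w: "{w, w'} = {u,v}" "w \<noteq> w'" for w w'
    proof (rule ccontr)
      assume nP: "Sub (Mid e) (Sub e w) \<notin> P"
      have wu: "w \<in> {u,v}" "w' \<in> {u,v}" using w by auto
      obtain b where b: "adj (?K\<lparr>edges := F\<rparr>) (Sub (Mid e) (Sub e w)) b" "b \<in> P"
        using opp[OF vm[OF wu(1)]] nP by blast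
      have bm: "b = Sub (Mid e) (Sub e w')" using N4[OF w b(1)] b(2) Onp[OF wu(1)] by auto
      obtain c where c: "adj (?K\<lparr>edges := F\<rparr>) (Sub (Mid e) (Sub e w')) c" "c \<in> P"
        using pn b(2) bm by blast
      have w': "{w', w} = {u,v}" "w' \<noteq> w" using w by (auto simp: insert_commute)
      show False using N4[OF w' c(1)] c(2) nP Onp[OF wu(2)] by auto
    qed
    have midF: "Mid (Mid e) \<in> F \<and> Att (Mid e) (Sub e w) \<in> F" if w: "{w, w'} = {u,v}" "w \<noteq> w'" for w w'
    proof -
      have wu: "w \<in> {u,v}" "w' \<in> {u,v}" using w by auto
      have w': "{w', w} = {u,v}" "w' \<noteq> w" using w by (auto simp: insert_commute)
      obtain b where b: "b \<noteq> Sub (Mid e) (Sub e w)" "adj (?K\<lparr>edges := F\<rparr>) (Sub (Mid e) (Sub e w)) b" "b \<in> P"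
        using pn[OF mP[OF w]] by blast
      have m1: "Mid (Mid e) \<in> F" using N4[OF w b(2)] b(3) Onp[OF wu(1)] by auto
      obtain c where c: "adj (?K\<lparr>edges := F\<rparr>) (Sub (Mid e) (Sub e w)) c" "c \<in> P \<longleftrightarrow> Sub (Mid e) (Sub e w) \<notin> P"
        using opp[OF vm[OF wu(1)]] by blast
      have "Att (Mid e) (Sub e w) \<in> F" using N4[OF w c(1)] c(2) mP[OF w] mP[OF w'] by auto
      then show ?thesis using m1 by simp
    qed
    have mu: "Mid (Mid e) \<in> F" "Att (Mid e) (Sub e u) \<in> F" using midF[of u v] E(3) by auto
    have mv: "Att (Mid e) (Sub e v) \<in> F" using midF[of v u] E(3) by (auto simp: insert_commute)
    have "edges ?K \<subseteq> F"
    proof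
      fix g assume g: "g \<in> edges ?K"
      from wfG nlG g show "g \<in> F"
      proof (cases rule: K_edges_cases)
        case (Mid h x y)
        then consider "h = Mid e" | w i where "w \<in> {u,v}" "h = PendE w i" "1 \<le> i" "i \<le> \<alpha> w"
          using EG by auto
        then show ?thesis
        proof cases
          case 1 then show ?thesis using Mid mu by simp
        next
          case 2 then show ?thesis using Mid side by simp
        qed
      next
        case (Att h x)
        then consider "h = Mid e" | w i where "w \<in> {u,v}" "h = PendE w i" "1 \<le> i" "i \<le> \<alpha> w"
          using EG by auto
        then show ?thesis
        proof cases
          case 1 then show ?thesis using Att mu mv endsM by auto
        next
          case 2
          then have "x = Sub e w" using Att endsP[OF 2(1)] lG by auto
          then show ?thesis using Att side 2 by simp
        qed
      next
        case (PendE x k h)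
        then obtain w i where "x = Pend w i" "w \<in> {u,v}" "1 \<le> i" "i \<le> \<alpha> w" using lG by blast
        then show ?thesis using side PendE by auto
      qed
    qed
    then show False using Fs by blast
  qed
  ultimately show ?thesis unfolding minimal_DPDP_def G_def by blast
qed

end

lemma conn_closed:
  assumes c: "connected H" and S: "x \<in> S" "x \<in> verts H" and cl: "\<And>a b. a \<in> S \<Longrightarrow> adj H a b \<Longrightarrow> b \<in> S"
  shows "verts H \<subseteq> S"
proof
  fix y assume y: "y \<in> verts H"
  have "(adj H)\<^sup>*\<^sup>* x y" using c S y unfolding connected_def by blast
  then show "y \<in> S"
  proof (induction rule: rtranclp_induct)
    case base then show ?case using S by simp
  next
    case (step b c) then show ?case using cl by blast
  qed
qed

lemma conn_ni:
  assumes wf: "wf_mgraph H" and c: "connected H" and e: "e \<in> edges H"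
  shows "\<forall>v\<in>verts H. \<exists>e\<in>edges H. v \<in> ends H e"
proof -
  let ?S = "{x. \<exists>e\<in>edges H. x \<in> ends H e}"
  obtain x where x: "x \<in> ends H e" using wf e by (cases rule: wf_endsE) auto
  have "verts H \<subseteq> ?S"
  proof (rule conn_closed[OF c, of x])
    show "x \<in> ?S" using x e by blast
    show "x \<in> verts H" using wf_ends_sub[OF wf e x] .
    fix a b assume "a \<in> ?S" "adj H a b"
    then show "b \<in> ?S" unfolding adj_def by auto
  qed
  then show ?thesis by blast
qed

theorem corollary6p4:
  fixes H :: "('v,'e) mgraph" and \<alpha> :: "'v \<Rightarrow> nat"
    and \<beta> :: "('v,'e) s2v \<Rightarrow> nat"
  assumes "wf_mgraph H" and "connected H"
    and "\<forall>v\<in>leaves H. 1 \<le> \<alpha> v"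
    and "\<forall>x\<in>leaves (S2 H \<alpha>). 1 \<le> \<beta> x"
  shows "minimal_DPDP (S2 (S2 H \<alpha>) \<beta>) \<longleftrightarrow> card (edges H) = 1"
proof -
  note wf = assms(1) and c = assms(2) and al = assms(3) and be = assms(4)
  have fe: "finite (edges H)" using wf by (simp add: wf_mgraph_def)
  show ?thesis
  proof
    assume card1: "card (edges H) = 1"
    then obtain e where E: "edges H = {e}" by (rule card_1_singletonE)
    have eE: "e \<in> edges H" using E by simp
    show "minimal_DPDP (S2 (S2 H \<alpha>) \<beta>)"
      using wf eE
    proof (cases rule: wf_endsE)
      case (loop v)
      have "verts H \<subseteq> {v}"
      proof (rule conn_closed[OF c, of v])
        show "v \<in> {v}" by simp
        show "v \<in> verts H" using loop by simp
        fix a b assume "a \<in> {v}" "adj H a b"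
        then show "b \<in> {v}" using E loop unfolding adj_def by (auto simp: doubleton_eq_iff)
      qed
      then have "verts H = {v}" using loop by auto
      then show ?thesis using loop_min[OF wf al E loop(1)] be by blast
    next
      case (nonloop a b)
      have "verts H \<subseteq> {a,b}"
      proof (rule conn_closed[OF c, of a])
        show "a \<in> {a,b}" by simp
        show "a \<in> verts H" using nonloop by simp
        fix x y assume "x \<in> {a,b}" "adj H x y"
        then show "y \<in> {a,b}" using E nonloop unfolding adj_def by (auto simp: doubleton_eq_iff)
      qed
      then have "verts H = {a,b}" using nonloop by auto
      then show ?thesis using edge_min[OF wf al E nonloop(1,2)] be by blast
    qed
  next
    assume min: "minimal_DPDP (S2 (S2 H \<alpha>) \<beta>)"
    then have dK: "DPDP (S2 (S2 H \<alpha>) \<beta>)"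
      and mK: "\<And>F. F \<subset> edges (S2 (S2 H \<alpha>) \<beta>) \<Longrightarrow> \<not> DPDP ((S2 (S2 H \<alpha>) \<beta>)\<lparr>edges := F\<rparr>)"
      unfolding minimal_DPDP_def by auto
    show "card (edges H) = 1"
    proof (rule ccontr)
      assume cn: "card (edges H) \<noteq> 1"
      show False
      proof (cases "edges H = {}")
        case True
        obtain v where v: "v \<in> verts H" using c unfolding connected_def by blast
        have lH: "leaves H = {}"
        proof -
          have "degree H x = 0" for x using True by (simp add: degree_def)
          then show ?thesis by (auto simp: leaves_def)
        qed
        have lG: "leaves (S2 H \<alpha>) = {}" using S2_leaves[OF wf al] lH by simp
        have eG: "edges (S2 H \<alpha>) = {}"
        proof -
          have "g \<notin> edges (S2 H \<alpha>)" for g using True lH by (cases g) auto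
          then show ?thesis by blast
        qed
        have eK: "edges (S2 (S2 H \<alpha>) \<beta>) = {}"
        proof -
          have "f \<notin> edges (S2 (S2 H \<alpha>) \<beta>)" for f using eG lG by (cases f) auto
          then show ?thesis by blast
        qed
        have vK: "Orig (Orig v) \<in> verts (S2 (S2 H \<alpha>) \<beta>)" using v lH lG by simp
        obtain P where "\<forall>a\<in>verts (S2 (S2 H \<alpha>) \<beta>). \<exists>b. adj (S2 (S2 H \<alpha>) \<beta>) a b \<and> (b \<in> P \<longleftrightarrow> a \<notin> P)"
          using weak_DPDP[OF dK] by blast
        then obtain b where "adj (S2 (S2 H \<alpha>) \<beta>) (Orig (Orig v)) b" using vK by blast
        then show False using eK unfolding adj_def by simp
      next
        case False
        then obtain e0 where e0: "e0 \<in> edges H" by blast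
        have ni: "\<forall>v\<in>verts H. \<exists>e\<in>edges H. v \<in> ends H e" using conn_ni[OF wf c e0] .
        have noB: "\<not> (e \<in> edges H \<and> is_loop H e \<and> v \<in> ends H e \<and> e' \<in> edges H \<and> v \<in> ends H e' \<and> e' \<noteq> e)"
          for e v e'
        proof
          assume h: "e \<in> edges H \<and> is_loop H e \<and> v \<in> ends H e \<and> e' \<in> edges H \<and> v \<in> ends H e' \<and> e' \<noteq> e"
          have d: "DPDP ((S2 (S2 H \<alpha>) \<beta>)\<lparr>edges := edges (S2 (S2 H \<alpha>) \<beta>) - {Mid (Mid e)}\<rparr>)"
            using constrB[OF wf al, of e v e' \<beta>] h be ni by blast
          have "Mid (Mid e) \<in> edges (S2 (S2 H \<alpha>) \<beta>)" using h by simp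
          then have "edges (S2 (S2 H \<alpha>) \<beta>) - {Mid (Mid e)} \<subset> edges (S2 (S2 H \<alpha>) \<beta>)" by blast
          then show False using mK d by blast
        qed
        have noS: "\<not> (w \<in> verts H \<and> w \<notin> leaves H \<and> (\<forall>e\<in>edges H. w \<in> ends H e \<longrightarrow> \<not> is_loop H e) \<and>
                      e1 \<in> edges H \<and> w \<in> ends H e1)" for w e1
        proof
          assume h: "w \<in> verts H \<and> w \<notin> leaves H \<and> (\<forall>e\<in>edges H. w \<in> ends H e \<longrightarrow> \<not> is_loop H e) \<and>
                      e1 \<in> edges H \<and> w \<in> ends H e1"
          let ?A = "{e\<in>edges H. w \<in> ends H e \<and> \<not> is_loop H e}"
          let ?B = "{e\<in>edges H. is_loop H e \<and> w \<in> ends H e}"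
          have B: "?B = {}" using h by blast
          have fA: "finite ?A" using fe by simp
          have e1A: "e1 \<in> ?A" using h by blast
          have "degree H w \<noteq> 1" using h by (auto simp: leaves_def)
          then have "card ?A \<noteq> 1" unfolding degree_alt[OF wf] B by simp
          moreover have "card ?A \<ge> 1" using fA e1A by (metis One_nat_def Suc_leI card_gt_0_iff empty_iff)
          ultimately have "card (?A - {e1}) \<ge> 1" using fA e1A by simp
          then have "?A - {e1} \<noteq> {}" by (cases "?A - {e1} = {}") auto
          then obtain e2 where e2: "e2 \<in> ?A" "e2 \<noteq> e1" by blast
          have d: "DPDP ((S2 (S2 H \<alpha>) \<beta>)\<lparr>edges := edges (S2 (S2 H \<alpha>) \<beta>) - {Att (Att e1 w) (Sub e1 w)}\<rparr>)"
            using constrS[OF wf al, of w e1 e2 \<beta>] h e2 be ni by blast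
          have nl1: "\<not> is_loop H e1" using h by blast
          have "\<not> is_loop (S2 H \<alpha>) (Att e1 w)" by (simp add: is_loop_def)
          then have "Att (Att e1 w) (Sub e1 w) \<in> edges (S2 (S2 H \<alpha>) \<beta>)"
            using h nl1 G_leaves[OF wf al] by simp
          then have "edges (S2 (S2 H \<alpha>) \<beta>) - {Att (Att e1 w) (Sub e1 w)} \<subset> edges (S2 (S2 H \<alpha>) \<beta>)" by blast
          then show False using mK d by blast
        qed
        have "edges H = {e0}"
          using wf e0
        proof (cases rule: wf_endsE)
          case (loop v)
          have only: "e' = e0" if "e' \<in> edges H" "v \<in> ends H e'" for e'
            using noB[of e0 v e'] loop e0 that by auto
          have "verts H \<subseteq> {v}"
          proof (rule conn_closed[OF c, of v])
            show "v \<in> {v}" by simp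
            show "v \<in> verts H" using loop by simp
            fix a b assume "a \<in> {v}" "adj H a b"
            then obtain f where "f \<in> edges H" "ends H f = {v, b}" unfolding adj_def by auto
            then show "b \<in> {v}" using only[of f] loop by auto
          qed
          then have "v \<in> ends H e'" if "e' \<in> edges H" for e'
          proof -
            have "ends H e' \<noteq> {}" "ends H e' \<subseteq> verts H" using wf that by (auto simp: wf_mgraph_def)
            then show ?thesis using \<open>verts H \<subseteq> {v}\<close> by blast
          qed
          then show ?thesis using only e0 by blast
        next
          case (nonloop a b)
          have leaf: "x \<in> leaves H" if "x \<in> {a,b}" for x
          proof (rule ccontr)
            assume nl: "x \<notin> leaves H"
            have xe: "x \<in> ends H e0" "x \<in> verts H" using that nonloop by auto
            obtain e where "e \<in> edges H" "x \<in> ends H e" "is_loop H e"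
              using noS[of x e0] nl xe e0 by blast
            then show False using noB[of e x e0] e0 xe nonloop by auto
          qed
          have only: "e' = e0" if h: "e' \<in> edges H" "x \<in> ends H e'" "x \<in> {a,b}" for e' x
          proof -
            have xl: "x \<in> leaves H" using leaf h(3) by blast
            obtain f where f: "f \<in> edges H" "x \<in> ends H f" "\<And>e'. e' \<in> edges H \<Longrightarrow> x \<in> ends H e' \<Longrightarrow> e' = f"
              using leaf_edge[OF wf xl] by metis
            have "x \<in> ends H e0" using h(3) nonloop by auto
            then have "e0 = f" using f(3) e0 by blast
            moreover have "e' = f" using f(3) h(1,2) by blast
            ultimately show ?thesis by simp
          qed
          have "verts H \<subseteq> {a,b}"
          proof (rule conn_closed[OF c, of a])
            show "a \<in> {a,b}" by simp
            show "a \<in> verts H" using nonloop by simp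
            fix x y assume xy: "x \<in> {a,b}" "adj H x y"
            then obtain f where "f \<in> edges H" "ends H f = {x, y}" unfolding adj_def by auto
            then show "y \<in> {a,b}" using only[of f x] xy nonloop by auto
          qed
          moreover have "ends H e' \<noteq> {}" "ends H e' \<subseteq> verts H" if "e' \<in> edges H" for e'
            using wf that by (auto simp: wf_mgraph_def)
          ultimately have "e' = e0" if "e' \<in> edges H" for e'
            using only that by blast
          then show ?thesis using e0 by blast
        qed
        then show False using cn by simp
      qed
    qed
  qed
qed

end
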